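(* Let $A\in\mathbb{R}^{nm\times nm}$ be symmetric with eigenvalues $\lambda_1\le\lambda_2\le\dots\le\lambda_{nm}$, let $x=\operatorname{vec}(X)$ with $\|x\|=1$ and thin SVD $X=USV^\top$ ($U^\top U=I_r$, $V^\top V=I_r$, $S$ diagonal positive), and let $C=A-\mathfrak{R}(x)I_{nm}$ with $\mathfrak{R}(x)=x^\top Ax$. Then for every nonzero $\tau\in\mathbb{R}^{nr+mr+r^2}$ with $B^\top\tau=0$: (i) $z=E\tau$ is nonzero, orthogonal to $x$, satisfies $\|z\|=\|\tau\|$, and $\tau^\top C_{\mathrm{loc}}\tau=z^\top Cz$; consequently \[ \frac{\tau^\top C_{\mathrm{loc}}\tau}{\tau^\top\tau}\in\Big[\min_{z\perp x,\,z\ne0}\frac{z^\top Cz}{z^\top z},\ \max_{z\perp x,\,z\ne0}\frac{z^\top Cz}{z^\top z}\Big]; \] (ii) $\tau^\top C_{\mathrm{loc}}\tau\ge(\lambda_1+\lambda_2-2\mathfrak{R}(x))\,\|\tau\|^2$. In particular, if $\mathfrak{R}(x)<(\lambda_1+\lambda_2)/2$, then $C_{\mathrm{loc}}$ is positive definite on the subspace $\{\tau: B^\top\tau=0\}$, and the condition number of $(I-BB^\top)C_{\mathrm{loc}}(I-BB^\top)$ restricted to this subspace is at most $\dfrac{\max_{z\perp x,z\ne0} z^\top Cz/z^\top z}{\min_{z\perp x,z\ne0} z^\top Cz/z^\top z}$.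
   Context: $\operatorname{vec}$ is columnwise reshaping. Define $E_v=V\otimes I_n$, $E_u=I_m\otimes U$, $E_{vu}=V\otimes U$, the $nm\times(nr+mr+r^2)$ matrix $E=[E_v\ E_u\ E_{vu}]$ (so $E\,(\operatorname{vec}(U_z),\operatorname{vec}(V_z^\top),\operatorname{vec}(S_z))=\operatorname{vec}(U_zV^\top+UV_z^\top+US_zV^\top)$), and for $M\in\mathbb{R}^{nm\times nm}$, $a,b\in\{v,u,vu\}$, $M_{a,b}=E_a^\top ME_b$. The local matrix is $C_{\mathrm{loc}}=E^\top CE=[C_{a,b}]_{a,b\in\{v,u,vu\}}$. Further \[ B=\begin{bmatrix} I_r\otimes U&0&0\\ 0&V\otimes I_r&0\\ 0&0&\operatorname{vec}(S)\end{bmatrix}, \] so that for $\tau=(\operatorname{vec}(U_z),\operatorname{vec}(V_z^\top),\operatorname{vec}(S_z))$ the condition $B^\top\tau=0$ means $U^\top U_z=0$, $V^\top V_z=0$, $\operatorname{vec}(S)^\top\operatorname{vec}(S_z)=0$. *)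

theory Defs
  imports "Jordan_Normal_Form.Char_Poly"
begin

(* Columnwise reshaping: vec X (i + n*j) = X(i,j) for X of size n x m. *)
definition vecm :: "real mat \<Rightarrow> real vec" where
  "vecm X = vec (dim_row X * dim_col X) (\<lambda>k. X $$ (k mod dim_row X, k div dim_row X))"

definition kron :: "real mat \<Rightarrow> real mat \<Rightarrow> real mat" where
  "kron A B = mat (dim_row A * dim_row B) (dim_col A * dim_col B)
     (\<lambda>(p,q). A $$ (p div dim_row B, q div dim_col B) * B $$ (p mod dim_row B, q mod dim_col B))"

definition hcat :: "real mat \<Rightarrow> real mat \<Rightarrow> real mat" where
  "hcat A B = mat (dim_row A) (dim_col A + dim_col B)
     (\<lambda>(i,j). if j < dim_col A then A $$ (i,j) else B $$ (i, j - dim_col A))"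

definition bdiag :: "real mat \<Rightarrow> real mat \<Rightarrow> real mat" where
  "bdiag A B = four_block_mat A (0\<^sub>m (dim_row A) (dim_col B)) (0\<^sub>m (dim_row B) (dim_col A)) B"

definition colmat :: "real vec \<Rightarrow> real mat" where
  "colmat v = mat (dim_vec v) 1 (\<lambda>(i,j). v $ i)"

definition Emat :: "real mat \<Rightarrow> real mat \<Rightarrow> real mat" where
  "Emat U V = hcat (hcat (kron V (1\<^sub>m (dim_row U))) (kron (1\<^sub>m (dim_row V)) U)) (kron V U)"

definition Bmat :: "real mat \<Rightarrow> real mat \<Rightarrow> real mat \<Rightarrow> real mat" where
  "Bmat U S V = bdiag (bdiag (kron (1\<^sub>m (dim_col U)) U) (kron V (1\<^sub>m (dim_col U)))) (colmat (vecm S))"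

definition rayleigh :: "real mat \<Rightarrow> real vec \<Rightarrow> real" where
  "rayleigh A x = x \<bullet> (A *\<^sub>v x)"

definition perp_quotients :: "real mat \<Rightarrow> real vec \<Rightarrow> real set" where
  "perp_quotients C x = {(z \<bullet> (C *\<^sub>v z)) / (z \<bullet> z) | z.
      z \<in> carrier_vec (dim_vec x) \<and> z \<bullet> x = 0 \<and> z \<noteq> 0\<^sub>v (dim_vec x)}"

definition restr_eigs :: "real mat \<Rightarrow> real vec set \<Rightarrow> real set" where
  "restr_eigs M W = {\<mu>. \<exists>w \<in> W. w \<noteq> 0\<^sub>v (dim_col M) \<and> M *\<^sub>v w = \<mu> \<cdot>\<^sub>v w}"

definition restr_cond :: "real mat \<Rightarrow> real vec set \<Rightarrow> real" where
  "restr_cond M W = Max (restr_eigs M W) / Min (restr_eigs M W)"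

end

theory Submission
  imports Defs "Jordan_Normal_Form.Schur_Decomposition"
begin


lemma conj_real_vec[simp]: "conjugate (w::real vec) = w"
  by (rule eq_vecI, auto)

lemma cscalar_real[simp]: "(v::real vec) \<bullet>c w = v \<bullet> w"
  by simp

lemma onb_exists:
  fixes v :: "real vec"
  assumes v: "v \<in> carrier_vec n" and v1: "v \<bullet> v = 1"
  shows "\<exists>W \<in> carrier_mat n n. W\<^sup>T * W = 1\<^sub>m n \<and> col W 0 = v"
proof -
  have v0: "v \<noteq> 0\<^sub>v n" using v1 v by auto
  interpret cof_vec_space n "TYPE(real)" .
  define b where "b = basis_completion v"
  from basis_completion[OF v v0, folded b_def]
  have dist_b: "distinct b" and indep: "\<not> lin_dep (set b)" and bc: "set b \<subseteq> carrier_vec n" and hdb: "hd b = v" 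
    and len_b: "length b = n" by auto
  have n: "n \<noteq> 0"
  proof
    assume "n = 0"
    hence "v = 0\<^sub>v n" using v by (intro eq_vecI) auto
    thus False using v0 by blast
  qed
  from hdb len_b n obtain vs where bv: "b = v # vs" by (cases b, auto)
  define ws where "ws = gram_schmidt n b"
  from gram_schmidt_result[OF bc dist_b indep refl, folded ws_def]
  have ws: "set ws \<subseteq> carrier_vec n" "corthogonal ws" "length ws = n" 
    by (auto simp: len_b)
  from gram_schmidt_hd[OF v, of vs, folded bv] have hdws: "hd ws = v" unfolding ws_def .
  have ws0: "ws ! 0 = v" using hdws ws(3) n by (cases ws, auto)
  define us where "us = map (\<lambda>w. (1 / sqrt (w \<bullet> w)) \<cdot>\<^sub>v w) ws"
  have wsc: "\<And>i. i < n \<Longrightarrow> ws ! i \<in> carrier_vec n" using ws by auto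
  have wsnz: "\<And>i. i < n \<Longrightarrow> ws ! i \<bullet> ws ! i \<noteq> 0"
    using corthogonalD[OF ws(2)] ws(3) by auto
  have wsorth: "\<And>i j. i < n \<Longrightarrow> j < n \<Longrightarrow> i \<noteq> j \<Longrightarrow> ws ! i \<bullet> ws ! j = 0"
    using corthogonalD[OF ws(2)] ws(3) by auto
  have wspos: "\<And>i. i < n \<Longrightarrow> ws ! i \<bullet> ws ! i > 0"
  proof -
    fix i assume i: "i < n"
    have "ws ! i \<bullet> ws ! i \<ge> 0" by (simp add: scalar_prod_def sum_nonneg)
    thus "ws ! i \<bullet> ws ! i > 0" using wsnz[OF i] by linarith
  qed
  have usc: "\<And>i. i < n \<Longrightarrow> us ! i \<in> carrier_vec n" using wsc ws(3) unfolding us_def by auto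
  have lus: "length us = n" using ws(3) unfolding us_def by simp
  define W where "W = mat_of_cols n us"
  have W: "W \<in> carrier_mat n n" unfolding W_def using lus by auto
  have colW: "\<And>i. i < n \<Longrightarrow> col W i = us ! i" unfolding W_def
    using lus usc by (simp add: col_mat_of_cols)
  have "W\<^sup>T * W = 1\<^sub>m n"
  proof (rule eq_matI)
    fix i j assume "i < dim_row (1\<^sub>m n)" "j < dim_col (1\<^sub>m n)"
    hence i: "i < n" and j: "j < n" by auto
    have "(W\<^sup>T * W) $$ (i,j) = col W i \<bullet> col W j" using W i j by auto
    also have "\<dots> = (1 / sqrt (ws!i \<bullet> ws!i)) * (1 / sqrt (ws!j \<bullet> ws!j)) * (ws ! i \<bullet> ws ! j)"
      using colW i j wsc[OF i] wsc[OF j] unfolding us_def using ws(3)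
      by (simp add: smult_scalar_prod_distrib[of _ n] scalar_prod_smult_distrib[of _ n])
    also have "\<dots> = 1\<^sub>m n $$ (i,j)"
    proof (cases "i = j")
      case True
      have p: "ws!i \<bullet> ws!i > 0" using wspos i by auto
      have "sqrt (ws!i \<bullet> ws!i) * sqrt (ws!i \<bullet> ws!i) = ws!i \<bullet> ws!i" using p by simp
      then show ?thesis using True i p by (simp add: field_simps)
    qed (use wsorth i j in auto)
    finally show "(W\<^sup>T * W) $$ (i,j) = 1\<^sub>m n $$ (i,j)" .
  qed (use W in auto)
  moreover have "col W 0 = v" using colW[of 0] n ws0 v1 unfolding us_def using ws(3) by simp
  ultimately show ?thesis using W by blast
qed



definition dmat :: "real list \<Rightarrow> real mat" where
  "dmat es = mat (length es) (length es) (\<lambda>(i,j). if i = j then es!i else 0)"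

lemma spectral_split:
  fixes A :: "real mat"
  assumes "A \<in> carrier_mat n n" "A\<^sup>T = A" "char_poly A = (\<Prod>e \<leftarrow> es. [:- e, 1:])"
  shows "\<exists>Q \<in> carrier_mat n n. Q\<^sup>T * Q = 1\<^sub>m n \<and> Q * Q\<^sup>T = 1\<^sub>m n \<and> Q\<^sup>T * A * Q = dmat es \<and> length es = n"
  using assms
proof (induct es arbitrary: n A)
  case Nil
  from degree_monic_char_poly[OF Nil(1)] Nil(3) have n0: "n = 0" by simp
  show ?case
    by (rule bexI[of _ "1\<^sub>m 0"], insert Nil(1) n0, auto intro!: eq_matI simp: dmat_def)
next
  case (Cons e es n A)
  note A = Cons(2) and sym = Cons(3)
  have cp: "char_poly A = [: -e, 1 :] * (\<Prod>e \<leftarrow> es. [:- e, 1:])" using Cons(4) by simp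
  have mon: "monic (\<Prod>e\<leftarrow> es. [:- e, 1:])" by (rule monic_prod_list, auto)
  have deg: "degree (char_poly A) = Suc (degree (\<Prod>e\<leftarrow> es. [:- e, 1:]))" unfolding cp
    by (subst degree_mult_eq, insert mon, auto)
  with degree_monic_char_poly[OF A] have n: "n \<noteq> 0" by auto
  have ev: "eigenvalue A e" unfolding eigenvalue_root_char_poly[OF A] cp by simp
  define v where "v = find_eigenvector A e"
  from find_eigenvector[OF A ev, folded v_def, unfolded eigenvector_def]
  have v: "v \<in> carrier_vec n" and v0: "v \<noteq> 0\<^sub>v n" and Av: "A *\<^sub>v v = e \<cdot>\<^sub>v v" using A by auto
  have vv: "v \<bullet> v > 0"
  proof -
    have "v \<bullet> v \<ge> 0" by (simp add: scalar_prod_def sum_nonneg)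
    moreover have "v \<bullet> v \<noteq> 0"
    proof
      assume "v \<bullet> v = 0"
      hence "\<forall>i<n. v $ i = 0" using v unfolding scalar_prod_def
        by (subst (asm) sum_nonneg_eq_0_iff) auto
      hence "v = 0\<^sub>v n" using v by (intro eq_vecI) auto
      thus False using v0 by blast
    qed
    ultimately show ?thesis by linarith
  qed
  define v1 where "v1 = (1 / sqrt (v \<bullet> v)) \<cdot>\<^sub>v v"
  have v1: "v1 \<in> carrier_vec n" unfolding v1_def using v by auto
  have v1v1: "v1 \<bullet> v1 = 1"
  proof -
    have "v1 \<bullet> v1 = (1 / sqrt (v \<bullet> v)) * (1 / sqrt (v \<bullet> v)) * (v \<bullet> v)"
      unfolding v1_def using v by (simp add: smult_scalar_prod_distrib[of _ n] scalar_prod_smult_distrib[of _ n])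
    also have "\<dots> = 1" using vv by (simp add: field_simps)
    finally show ?thesis .
  qed
  have Av1: "A *\<^sub>v v1 = e \<cdot>\<^sub>v v1" unfolding v1_def using A v Av
    by (simp add: mult_mat_vec[of _ n n] smult_smult_assoc mult.commute)
  from onb_exists[OF v1 v1v1] obtain W where W: "W \<in> carrier_mat n n" and WtW: "W\<^sup>T * W = 1\<^sub>m n"
    and col0: "col W 0 = v1" by blast
  have WWt: "W * W\<^sup>T = 1\<^sub>m n" using mat_mult_left_right_inverse[of "W\<^sup>T" n W] W WtW by auto
  define A' where "A' = W\<^sup>T * A * W"
  have A': "A' \<in> carrier_mat n n" unfolding A'_def using W A by auto
  have A'sym: "A'\<^sup>T = A'"
  proof -
    have "A'\<^sup>T = W\<^sup>T * (W\<^sup>T * A)\<^sup>T" unfolding A'_def using W A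
      by (subst transpose_mult[of _ n n _ n]) auto
    also have "(W\<^sup>T * A)\<^sup>T = A\<^sup>T * W" using W A
      by (subst transpose_mult[of _ n n _ n]) auto
    finally show ?thesis unfolding A'_def using W A sym by (simp add: assoc_mult_mat[of _ n n _ n _ n])
  qed
  have A'col: "\<And>i. i < n \<Longrightarrow> A' $$ (i,0) = (if i = 0 then e else 0)"
  proof -
    fix i assume i: "i < n"
    have "A' $$ (i,0) = (W\<^sup>T * (A * W)) $$ (i,0)" unfolding A'_def using W A
      by (simp add: assoc_mult_mat[of _ n n _ n _ n])
    also have "\<dots> = row W\<^sup>T i \<bullet> col (A * W) 0" using W A i n by simp
    also have "col (A * W) 0 = A *\<^sub>v col W 0" by (rule col_mult2) (use W A n in auto)
    also have "\<dots> = e \<cdot>\<^sub>v col W 0" using col0 Av1 by simp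
    also have "row W\<^sup>T i \<bullet> (e \<cdot>\<^sub>v col W 0) = e * (row W\<^sup>T i \<bullet> col W 0)"
      using W i by (simp add: scalar_prod_smult_distrib[of _ n])
    also have "row W\<^sup>T i \<bullet> col W 0 = (W\<^sup>T * W) $$ (i,0)" using W i n by simp
    also have "\<dots> = (if i = 0 then 1 else 0)" using WtW i n by simp
    finally show "A' $$ (i,0) = (if i = 0 then e else 0)" by simp
  qed
  have A'row: "\<And>j. j < n \<Longrightarrow> A' $$ (0,j) = (if j = 0 then e else 0)"
  proof -
    fix j assume j: "j < n"
    have "A' $$ (0,j) = A'\<^sup>T $$ (0,j)" using A'sym by simp
    also have "\<dots> = A' $$ (j,0)" using A' j n by simp
    finally show "A' $$ (0,j) = (if j = 0 then e else 0)" using A'col[OF j] by simp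
  qed
  define A3 where "A3 = mat (n-1) (n-1) (\<lambda>(i,j). A' $$ (Suc i, Suc j))"
  define A1 where "A1 = mat 1 1 (\<lambda>_. e)"
  have A3: "A3 \<in> carrier_mat (n-1) (n-1)" unfolding A3_def by simp
  have A1: "A1 \<in> carrier_mat 1 1" unfolding A1_def by simp
  have A'blk: "A' = four_block_mat A1 (0\<^sub>m 1 (n-1)) (0\<^sub>m (n-1) 1) A3"
  proof (rule eq_matI)
    fix i j assume "i < dim_row (four_block_mat A1 (0\<^sub>m 1 (n-1)) (0\<^sub>m (n-1) 1) A3)"
      "j < dim_col (four_block_mat A1 (0\<^sub>m 1 (n-1)) (0\<^sub>m (n-1) 1) A3)"
    hence i: "i < n" and j: "j < n" using A1 A3 n by auto
    show "A' $$ (i,j) = four_block_mat A1 (0\<^sub>m 1 (n-1)) (0\<^sub>m (n-1) 1) A3 $$ (i,j)"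
    proof (cases "i = 0 \<or> j = 0")
      case True
      then show ?thesis using A'col A'row i j n A1 A3 by (auto simp: A1_def)
    next
      case False
      then obtain i' j' where "i = Suc i'" "j = Suc j'" by (cases i; cases j) auto
      then show ?thesis using i j n A1 A3 by (simp add: A3_def)
    qed
  qed (use A' A1 A3 n in auto)
  have A3sym: "A3\<^sup>T = A3"
  proof (rule eq_matI)
    fix i j assume "i < dim_row A3" "j < dim_col A3"
    hence i: "i < n - 1" and j: "j < n - 1" using A3 by auto
    have "A' $$ (Suc j, Suc i) = A'\<^sup>T $$ (Suc i, Suc j)" using A' i j by simp
    then show "A3\<^sup>T $$ (i,j) = A3 $$ (i,j)" using i j A'sym by (simp add: A3_def)
  qed (use A3 in auto)
  have sim: "similar_mat_wit A' A (W\<^sup>T) W"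
    unfolding similar_mat_wit_def Let_def A'_def using W A WtW WWt by auto
  have "char_poly A' = char_poly A"
    by (rule char_poly_similar, unfold similar_mat_def, use sim in blast)
  also have "char_poly A' = char_poly A1 * char_poly A3"
    unfolding A'blk by (rule char_poly_four_block_zeros_col[OF A1 _ A3], auto)
  also have "char_poly A1 = [: -e,1 :]"
    by (simp add: A1_def char_poly_defs det_def sign_def)
  finally have cp3: "char_poly A3 = (\<Prod> e \<leftarrow> es. [:- e, 1:])" unfolding cp
    by (metis mult_cancel_left pCons_eq_0_iff zero_neq_one)
  from Cons(1)[OF A3 A3sym cp3] obtain Q3 where Q3: "Q3 \<in> carrier_mat (n-1) (n-1)"
    and Q3o: "Q3\<^sup>T * Q3 = 1\<^sub>m (n-1)" "Q3 * Q3\<^sup>T = 1\<^sub>m (n-1)" and Q3d: "Q3\<^sup>T * A3 * Q3 = dmat es"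
    and les: "length es = n - 1" by blast
  define Q3' where "Q3' = four_block_mat (1\<^sub>m 1) (0\<^sub>m 1 (n-1)) (0\<^sub>m (n-1) 1) Q3"
  have Q3': "Q3' \<in> carrier_mat n n" unfolding Q3'_def using Q3 n
    by (metis Suc_pred' four_block_carrier_mat gr0I one_carrier_mat plus_1_eq_Suc)
  have Q3't: "Q3'\<^sup>T = four_block_mat (1\<^sub>m 1) (0\<^sub>m 1 (n-1)) (0\<^sub>m (n-1) 1) Q3\<^sup>T"
    unfolding Q3'_def using Q3 by (subst transpose_four_block_mat[of _ 1 1 _ "n-1" _ "n-1"], auto)
  have Q3'o1: "Q3'\<^sup>T * Q3' = 1\<^sub>m n"
    unfolding Q3't unfolding Q3'_def using Q3 Q3o n
    by (subst mult_four_block_mat[of _ 1 1 _ "n-1" _ "n-1" _ _ 1 _ "n-1" _ _], auto)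
  have Q3'o2: "Q3' * Q3'\<^sup>T = 1\<^sub>m n"
    unfolding Q3't unfolding Q3'_def using Q3 Q3o n
    by (subst mult_four_block_mat[of _ 1 1 _ "n-1" _ "n-1" _ _ 1 _ "n-1" _ _], auto)
  define Q where "Q = W * Q3'"
  have Q: "Q \<in> carrier_mat n n" unfolding Q_def using W Q3' by auto
  have Qt: "Q\<^sup>T = Q3'\<^sup>T * W\<^sup>T" unfolding Q_def using W Q3' by (simp add: transpose_mult[of _ n n])
  have "Q\<^sup>T * Q = Q3'\<^sup>T * (W\<^sup>T * W) * Q3'" unfolding Qt unfolding Q_def using W Q3'
    by (simp add: assoc_mult_mat[of _ n n _ n _ n])
  hence o1: "Q\<^sup>T * Q = 1\<^sub>m n" using WtW Q3'o1 Q3' by simp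
  have o2: "Q * Q\<^sup>T = 1\<^sub>m n" using mat_mult_left_right_inverse[of "Q\<^sup>T" n Q] Q o1 by auto
  have "Q\<^sup>T * A * Q = Q3'\<^sup>T * A' * Q3'" unfolding Qt unfolding Q_def A'_def using W Q3' A
    by (simp add: assoc_mult_mat[of _ n n _ n _ n])
  also have "\<dots> = four_block_mat A1 (0\<^sub>m 1 (n-1)) (0\<^sub>m (n-1) 1) (Q3\<^sup>T * A3 * Q3)"
    unfolding Q3't A'blk unfolding Q3'_def using Q3 A1 A3
    apply (subst mult_four_block_mat[of _ 1 1 _ "n-1" _ "n-1" _ _ 1 _ "n-1" _ _], auto)
    apply (subst mult_four_block_mat[of _ 1 1 _ "n-1" _ "n-1" _ _ 1 _ "n-1" _ _], auto)
    done
  also have "\<dots> = dmat (e # es)" unfolding Q3d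
  proof (rule eq_matI)
    fix i j assume "i < dim_row (dmat (e # es))" "j < dim_col (dmat (e # es))"
    hence i: "i < n" and j: "j < n" using les n by (auto simp: dmat_def)
    show "four_block_mat A1 (0\<^sub>m 1 (n - 1)) (0\<^sub>m (n - 1) 1) (dmat es) $$ (i, j) = dmat (e # es) $$ (i, j)"
      using i j les n by (cases i; cases j) (auto simp: dmat_def A1_def)
  qed (use les n in \<open>auto simp: dmat_def A1_def\<close>)
  finally show ?case using Q o1 o2 les n by auto
qed



lemma herm_eig_real:
  fixes A :: "real mat" and w :: "complex vec"
  assumes A: "A \<in> carrier_mat n n" and sym: "A\<^sup>T = A"
    and w: "w \<in> carrier_vec n" "w \<noteq> 0\<^sub>v n"
    and ev: "map_mat complex_of_real A *\<^sub>v w = a \<cdot>\<^sub>v w"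
  shows "Im a = 0"
proof -
  let ?Ac = "map_mat complex_of_real A"
  have Aij: "\<And>i j. i < n \<Longrightarrow> j < n \<Longrightarrow> A $$ (i,j) = A $$ (j,i)"
  proof -
    fix i j assume "i < n" "j < n"
    hence "A\<^sup>T $$ (j,i) = A $$ (i,j)" using A by simp
    thus "A $$ (i,j) = A $$ (j,i)" using sym by simp
  qed
  have Mw: "\<And>i. i < n \<Longrightarrow> (\<Sum>j<n. complex_of_real (A $$ (i,j)) * w $ j) = a * w $ i"
  proof -
    fix i assume i: "i < n"
    have "(?Ac *\<^sub>v w) $ i = (\<Sum>j<n. complex_of_real (A $$ (i,j)) * w $ j)"
      using A w i by (simp add: scalar_prod_def lessThan_atLeast0)
    thus "(\<Sum>j<n. complex_of_real (A $$ (i,j)) * w $ j) = a * w $ i" using ev i w by simp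
  qed
  define s where "s = (\<Sum>i<n. \<Sum>j<n. cnj (w $ i) * complex_of_real (A $$ (i,j)) * w $ j)"
  have s1: "s = a * (\<Sum>i<n. cnj (w $ i) * w $ i)"
  proof -
    have "s = (\<Sum>i<n. cnj (w $ i) * (\<Sum>j<n. complex_of_real (A $$ (i,j)) * w $ j))"
      unfolding s_def by (simp add: sum_distrib_left mult.assoc)
    also have "\<dots> = (\<Sum>i<n. cnj (w $ i) * (a * w $ i))" using Mw by simp
    finally show ?thesis by (simp add: sum_distrib_left ac_simps)
  qed
  have "cnj s = (\<Sum>i<n. \<Sum>j<n. w $ i * complex_of_real (A $$ (i,j)) * cnj (w $ j))"
    unfolding s_def by (simp add: cnj_sum)
  also have "\<dots> = (\<Sum>j<n. \<Sum>i<n. w $ i * complex_of_real (A $$ (i,j)) * cnj (w $ j))"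
    by (rule sum.swap)
  also have "\<dots> = s" unfolding s_def
    by (intro sum.cong refl, simp add: Aij ac_simps)
  finally have cs: "cnj s = s" .
  from arg_cong[OF cs, of Im] have "- Im s = Im s" by simp
  hence ims: "Im s = 0" by linarith
  define N where "N = (\<Sum>i<n. (cmod (w $ i))^2)"
  have sN: "(\<Sum>i<n. cnj (w $ i) * w $ i) = complex_of_real N"
    unfolding N_def of_real_sum by (intro sum.cong refl, subst complex_norm_square, simp add: mult.commute)
  have "N \<noteq> 0"
  proof
    assume "N = 0"
    hence "\<forall>i\<in>{..<n}. (cmod (w $ i))^2 = 0" unfolding N_def
      by (subst (asm) sum_nonneg_eq_0_iff) auto
    hence "w = 0\<^sub>v n" using w by (intro eq_vecI) auto
    thus False using w by blast
  qed
  moreover have "Im s = Im a * N" unfolding s1 sN by simp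
  ultimately show "Im a = 0" using ims by simp
qed

lemma sym_split:
  fixes A :: "real mat"
  assumes A: "A \<in> carrier_mat n n" and sym: "A\<^sup>T = A"
  shows "\<exists>es. char_poly A = (\<Prod>e \<leftarrow> es. [:- e, 1:])"
proof -
  let ?Ac = "map_mat complex_of_real A"
  have Ac: "?Ac \<in> carrier_mat n n" using A by simp
  from char_poly_factorized[OF Ac] obtain as where cAc: "char_poly ?Ac = (\<Prod>a\<leftarrow>as. [:- a, 1:])" by blast
  have re: "\<And>a. a \<in> set as \<Longrightarrow> complex_of_real (Re a) = a"
  proof -
    fix a assume a: "a \<in> set as"
    have "poly (char_poly ?Ac) a = 0" unfolding cAc using a
      by (simp add: poly_prod_list prod_list_zero_iff)
    hence "eigenvalue ?Ac a" using eigenvalue_root_char_poly[OF Ac] by simp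
    from find_eigenvector[OF Ac this, unfolded eigenvector_def] Ac
    obtain w where "w \<in> carrier_vec n" "w \<noteq> 0\<^sub>v n" "?Ac *\<^sub>v w = a \<cdot>\<^sub>v w" by auto
    from herm_eig_real[OF A sym this] show "complex_of_real (Re a) = a"
      by (simp add: complex_eq_iff)
  qed
  interpret ph: map_poly_inj_idom_hom complex_of_real ..
  have "map_poly complex_of_real (\<Prod>e \<leftarrow> map Re as. [:- e, 1:]) = (\<Prod>a\<leftarrow>as. [:- a, 1:])"
    using re
  proof (induct as)
    case (Cons a as)
    have "map_poly complex_of_real [:- Re a, 1:] = [:- a, 1:]" using Cons(2)[of a] by simp
    moreover have "map_poly complex_of_real (\<Prod>e \<leftarrow> map Re as. [:- e, 1:]) = (\<Prod>a\<leftarrow>as. [:- a, 1:])"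
      using Cons by simp
    ultimately show ?case by (simp only: list.map prod_list.Cons ph.hom_mult)
  qed simp
  also have "\<dots> = map_poly complex_of_real (char_poly A)"
    unfolding cAc[symmetric] using of_real_hom.char_poly_hom[OF A] by simp
  finally have "(\<Prod>e \<leftarrow> map Re as. [:- e, 1:]) = char_poly A" by simp
  thus ?thesis by metis
qed



lemma weighted_two:
  fixes ls :: "real list" and c :: "nat \<Rightarrow> real"
  assumes srt: "sorted ls" and len: "length ls = n"
    and c0: "\<And>i. i < n \<Longrightarrow> 0 \<le> c i" and cs: "\<And>i. i < n \<Longrightarrow> c i \<le> s"
    and sum: "(\<Sum>i<n. c i) = 2 * s" and s: "s > 0"
  shows "(\<Sum>i<n. ls ! i * c i) \<ge> (ls ! 0 + ls ! 1) * s"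
proof -
  have n2: "n \<ge> 2"
  proof (rule ccontr)
    assume "\<not> n \<ge> 2"
    hence "n = 0 \<or> n = 1" by auto
    thus False using sum s cs[of 0] by auto
  qed
  have "(\<Sum>i<n. (ls ! i - ls ! 1) * c i) = (ls ! 0 - ls ! 1) * c 0 + (\<Sum>i\<in>{1..<n}. (ls ! i - ls ! 1) * c i)"
  proof -
    have "(\<Sum>i<n. (ls ! i - ls ! 1) * c i) = (\<Sum>i\<in>{0..<n}. (ls ! i - ls ! 1) * c i)"
      by (simp add: atLeast0LessThan)
    also have "\<dots> = (ls ! 0 - ls ! 1) * c 0 + (\<Sum>i\<in>{Suc 0..<n}. (ls ! i - ls ! 1) * c i)"
      by (rule sum.atLeast_Suc_lessThan) (use n2 in auto)
    finally show ?thesis by simp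
  qed
  moreover have "(\<Sum>i\<in>{1..<n}. (ls ! i - ls ! 1) * c i) \<ge> 0"
    using srt len c0 by (intro sum_nonneg mult_nonneg_nonneg) (auto simp: sorted_nth_mono)
  ultimately have ge: "(\<Sum>i<n. (ls ! i - ls ! 1) * c i) \<ge> (ls ! 0 - ls ! 1) * c 0" by linarith
  have "(\<Sum>i<n. (ls ! i - ls ! 1) * c i) + ls ! 1 * (\<Sum>i<n. c i) = (\<Sum>i<n. ls ! i * c i)"
    unfolding sum_distrib_left sum.distrib[symmetric] by (rule sum.cong) (auto simp: algebra_simps)
  hence "(\<Sum>i<n. ls ! i * c i) = (\<Sum>i<n. (ls ! i - ls ! 1) * c i) + ls ! 1 * (2 * s)"
    unfolding sum by simp
  moreover have "ls ! 0 \<le> ls ! 1" using srt len n2 by (auto simp: sorted_nth_mono)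
  moreover have "c 0 \<le> s" using cs n2 by auto
  ultimately have "(\<Sum>i<n. ls ! i * c i) - (ls ! 0 + ls ! 1) * s \<ge> (ls ! 1 - ls ! 0) * (s - c 0)"
    using ge by (simp add: algebra_simps)
  moreover have "(ls ! 1 - ls ! 0) * (s - c 0) \<ge> 0"
    using \<open>ls ! 0 \<le> ls ! 1\<close> \<open>c 0 \<le> s\<close> by simp
  ultimately show ?thesis by linarith
qed

lemma bessel2:
  fixes q x z :: "real vec"
  assumes q: "q \<in> carrier_vec n" and x: "x \<in> carrier_vec n" and z: "z \<in> carrier_vec n"
    and qq: "q \<bullet> q = 1" and xx: "x \<bullet> x = 1" and zx: "z \<bullet> x = 0" and s: "z \<bullet> z > 0"
  shows "(z \<bullet> z) * (q \<bullet> x)^2 + (q \<bullet> z)^2 \<le> z \<bullet> z"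
proof -
  define s where "s = z \<bullet> z"
  define a where "a = q \<bullet> x"
  define b where "b = q \<bullet> z"
  define r where "r = s \<cdot>\<^sub>v q - (s * a) \<cdot>\<^sub>v x - b \<cdot>\<^sub>v z"
  have r: "r \<in> carrier_vec n" unfolding r_def using q x z by auto
  have xq: "x \<bullet> q = a" unfolding a_def using comm_scalar_prod[OF x q] by simp
  have zq: "z \<bullet> q = b" unfolding b_def using comm_scalar_prod[OF z q] by simp
  have xz: "x \<bullet> z = 0" using comm_scalar_prod[OF x z] zx by simp
  have rq: "r \<bullet> q = s - s * a^2 - b^2" unfolding r_def using q x z qq xq zq
    by (simp add: minus_scalar_prod_distrib[of _ n] smult_scalar_prod_distrib[of _ n] power2_eq_square)
  have rx: "r \<bullet> x = 0" unfolding r_def using q x z xx xq zx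
    by (simp add: minus_scalar_prod_distrib[of _ n] smult_scalar_prod_distrib[of _ n] a_def)
  have rz: "r \<bullet> z = 0" unfolding r_def using q x z xz zq
    by (simp add: minus_scalar_prod_distrib[of _ n] smult_scalar_prod_distrib[of _ n] s_def b_def)
  have "r \<bullet> (s \<cdot>\<^sub>v q - (s * a) \<cdot>\<^sub>v x - b \<cdot>\<^sub>v z) = s * (r \<bullet> q) - (s * a) * (r \<bullet> x) - b * (r \<bullet> z)"
    using r q x z by (simp add: scalar_prod_minus_distrib[of _ n] scalar_prod_smult_distrib[of _ n])
  hence "r \<bullet> r = s * (r \<bullet> q) - (s * a) * (r \<bullet> x) - b * (r \<bullet> z)"
    unfolding r_def[symmetric] .
  hence rr: "r \<bullet> r = s * (s - s * a^2 - b^2)" using rq rx rz by simp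
  have "r \<bullet> r \<ge> 0" by (simp add: scalar_prod_def sum_nonneg)
  hence "s - s * a^2 - b^2 \<ge> 0" using rr s unfolding s_def
    by (simp add: zero_le_mult_iff)
  thus ?thesis unfolding s_def a_def b_def by simp
qed

lemma quad_rep:
  fixes A Q :: "real mat"
  assumes A: "A \<in> carrier_mat n n" and Q: "Q \<in> carrier_mat n n" and QQt: "Q * Q\<^sup>T = 1\<^sub>m n"
    and D: "Q\<^sup>T * A * Q = dmat ls" and len: "length ls = n" and y: "y \<in> carrier_vec n"
  shows "y \<bullet> (A *\<^sub>v y) = (\<Sum>i<n. ls ! i * (col Q i \<bullet> y)^2)"
    and "(\<Sum>i<n. (col Q i \<bullet> y)^2) = y \<bullet> y"
proof -
  define D where "D = dmat ls"
  have Dc: "D \<in> carrier_mat n n" unfolding D_def dmat_def using len by simp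
  have "Q * D * Q\<^sup>T = (Q * Q\<^sup>T) * A * (Q * Q\<^sup>T)" unfolding D_def D[symmetric] using A Q
    by (simp add: assoc_mult_mat[of _ n n _ n _ n])
  hence AD: "A = Q * D * Q\<^sup>T" unfolding QQt using A by simp
  define p where "p = Q\<^sup>T *\<^sub>v y"
  have p: "p \<in> carrier_vec n" unfolding p_def using Q y by simp
  have pi: "\<And>i. i < n \<Longrightarrow> p $ i = col Q i \<bullet> y" unfolding p_def using Q y by simp
  have Ay: "A *\<^sub>v y = Q *\<^sub>v (D *\<^sub>v p)" unfolding AD p_def using Q Dc y
    by (simp add: assoc_mult_mat_vec[of _ n n _ n])
  have Dp: "D *\<^sub>v p = vec n (\<lambda>i. ls ! i * p $ i)"
  proof (rule eq_vecI)
    fix i assume "i < dim_vec (vec n (\<lambda>i. ls ! i * p $ i))"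
    hence i: "i < n" by simp
    have "(D *\<^sub>v p) $ i = (\<Sum>j\<in>{0..<n}. (if i = j then ls ! i else 0) * p $ j)"
      using i Dc p len unfolding D_def by (simp add: dmat_def scalar_prod_def)
    also have "\<dots> = (\<Sum>j\<in>{0..<n}. if i = j then ls ! i * p $ j else 0)" by (rule sum.cong) auto
    also have "\<dots> = ls ! i * p $ i" using i by simp
    finally show "(D *\<^sub>v p) $ i = vec n (\<lambda>i. ls ! i * p $ i) $ i" using i by simp
  qed (use Dc in auto)
  have "y \<bullet> (A *\<^sub>v y) = p \<bullet> (D *\<^sub>v p)" unfolding Ay p_def
    using transpose_vec_mult_scalar[of Q n n "D *\<^sub>v (Q\<^sup>T *\<^sub>v y)" y] Q Dc y by simp
  also have "\<dots> = (\<Sum>i<n. ls ! i * (col Q i \<bullet> y)^2)" unfolding Dp using p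
    by (simp add: scalar_prod_def lessThan_atLeast0 pi power2_eq_square ac_simps)
  finally show "y \<bullet> (A *\<^sub>v y) = (\<Sum>i<n. ls ! i * (col Q i \<bullet> y)^2)" .
  have "p \<bullet> p = y \<bullet> (Q *\<^sub>v (Q\<^sup>T *\<^sub>v y))" unfolding p_def
    using transpose_vec_mult_scalar[of Q n n "Q\<^sup>T *\<^sub>v y" y] Q y by simp
  also have "Q *\<^sub>v (Q\<^sup>T *\<^sub>v y) = y" using Q y QQt
    by (simp add: assoc_mult_mat_vec[of _ n n _ n, symmetric])
  finally have "p \<bullet> p = y \<bullet> y" .
  moreover have "p \<bullet> p = (\<Sum>i<n. (col Q i \<bullet> y)^2)" using p
    by (simp add: scalar_prod_def lessThan_atLeast0 pi power2_eq_square)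
  ultimately show "(\<Sum>i<n. (col Q i \<bullet> y)^2) = y \<bullet> y" by simp
qed

lemma kyfan:
  fixes A :: "real mat"
  assumes A: "A \<in> carrier_mat n n" and sym: "A\<^sup>T = A"
    and cp: "char_poly A = (\<Prod>l \<leftarrow> ls. [:- l, 1:])" and srt: "sorted ls"
    and x: "x \<in> carrier_vec n" and xx: "x \<bullet> x = 1"
    and z: "z \<in> carrier_vec n" and zx: "z \<bullet> x = 0" and s: "z \<bullet> z > 0"
  shows "z \<bullet> (A *\<^sub>v z) + (x \<bullet> (A *\<^sub>v x)) * (z \<bullet> z) \<ge> (ls ! 0 + ls ! 1) * (z \<bullet> z)"
proof -
  from spectral_split[OF A sym cp] obtain Q where Q: "Q \<in> carrier_mat n n"
    and o1: "Q\<^sup>T * Q = 1\<^sub>m n" and o2: "Q * Q\<^sup>T = 1\<^sub>m n" and D: "Q\<^sup>T * A * Q = dmat ls"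
    and len: "length ls = n" by blast
  note qr = quad_rep[OF A Q o2 D len]
  define a where "a i = (col Q i \<bullet> x)^2" for i
  define b where "b i = (col Q i \<bullet> z)^2" for i
  define c where "c i = (z \<bullet> z) * a i + b i" for i
  have qq: "\<And>i. i < n \<Longrightarrow> col Q i \<bullet> col Q i = 1"
  proof -
    fix i assume i: "i < n"
    have "(Q\<^sup>T * Q) $$ (i,i) = col Q i \<bullet> col Q i" using Q i by simp
    thus "col Q i \<bullet> col Q i = 1" using o1 i by simp
  qed
  have c0: "\<And>i. i < n \<Longrightarrow> 0 \<le> c i" unfolding c_def a_def b_def using s by simp
  have cs: "\<And>i. i < n \<Longrightarrow> c i \<le> z \<bullet> z" unfolding c_def a_def b_def
    using bessel2[OF _ x z qq xx zx s] Q by simp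
  have suma: "(\<Sum>i<n. a i) = 1" unfolding a_def using qr(2)[OF x] xx by simp
  have sumb: "(\<Sum>i<n. b i) = z \<bullet> z" unfolding b_def using qr(2)[OF z] by simp
  have sumc: "(\<Sum>i<n. c i) = 2 * (z \<bullet> z)" unfolding c_def
    by (simp add: sum.distrib sum_distrib_left[symmetric] suma sumb)
  have "(\<Sum>i<n. ls ! i * c i) \<ge> (ls ! 0 + ls ! 1) * (z \<bullet> z)"
    by (rule weighted_two[OF srt len c0 cs sumc s])
  moreover have "(\<Sum>i<n. ls ! i * c i) = z \<bullet> (A *\<^sub>v z) + (x \<bullet> (A *\<^sub>v x)) * (z \<bullet> z)"
    unfolding qr(1)[OF x] qr(1)[OF z] c_def a_def b_def
    by (simp add: sum.distrib sum_distrib_left sum_distrib_right algebra_simps)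
  ultimately show ?thesis by simp
qed



lemma sum_mult_split:
  fixes f :: "nat \<Rightarrow> 'a::comm_monoid_add"
  shows "(\<Sum>k<a*b. f k) = (\<Sum>i<a. \<Sum>j<b. f (i*b + j))"
proof -
  have "(\<Sum>i<a. \<Sum>j<b. f (i*b + j)) = (\<Sum>(i,j)\<in>{..<a}\<times>{..<b}. f (i*b+j))"
    by (simp add: sum.cartesian_product)
  also have "\<dots> = (\<Sum>k<a*b. f k)"
  proof (rule sum.reindex_bij_witness[where i = "\<lambda>k. (k div b, k mod b)" and j = "\<lambda>(i,j). i*b+j"])
    fix k assume k: "k \<in> {..<a*b}"
    hence b: "b > 0" by (cases b) auto
    show "(case (k div b, k mod b) of (i, j) \<Rightarrow> i * b + j) = k" by simp
    show "(k div b, k mod b) \<in> {..<a} \<times> {..<b}" using k b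
      by (auto simp: less_mult_imp_div_less)
  next
    fix ij assume ij: "ij \<in> {..<a} \<times> {..<b}"
    obtain i j where [simp]: "ij = (i,j)" by force
    from ij have i: "i < a" and j: "j < b" by auto
    show "(case ij of (i, j) \<Rightarrow> i * b + j) \<in> {..<a * b}"
    proof -
      have "i * b + j < i * b + b" using j by simp
      also have "\<dots> = Suc i * b" by simp
      also have "\<dots> \<le> a * b" using i by (intro mult_right_mono) auto
      finally show ?thesis by simp
    qed
    show "((case ij of (i, j) \<Rightarrow> i * b + j) div b, (case ij of (i, j) \<Rightarrow> i * b + j) mod b) = ij"
      using j by simp
    show "f (case ij of (i, j) \<Rightarrow> i * b + j) = (case ij of (i, j) \<Rightarrow> f (i * b + j))" by simp
  qed
  finally show ?thesis by simp
qed

lemma kron_carrier[simp]: "kron A B \<in> carrier_mat (dim_row A * dim_row B) (dim_col A * dim_col B)"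
  unfolding kron_def by simp

lemma kron_dims[simp]: "dim_row (kron A B) = dim_row A * dim_row B" "dim_col (kron A B) = dim_col A * dim_col B"
  unfolding kron_def by simp_all

lemma kron_index:
  "p < dim_row A * dim_row B \<Longrightarrow> q < dim_col A * dim_col B \<Longrightarrow>
   kron A B $$ (p,q) = A $$ (p div dim_row B, q div dim_col B) * B $$ (p mod dim_row B, q mod dim_col B)"
  unfolding kron_def by simp

lemma div_lt: "p < a * (b::nat) \<Longrightarrow> p div b < a"
  by (simp add: less_mult_imp_div_less)

lemma mod_lt: "p < a * (b::nat) \<Longrightarrow> p mod b < b"
  by (cases b) auto

lemma kron_transpose: "(kron A B)\<^sup>T = kron A\<^sup>T B\<^sup>T"
  by (rule eq_matI) (auto simp: kron_index div_lt mod_lt)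

lemma kron_mult:
  assumes "dim_col A = dim_row C" "dim_col B = dim_row D"
  shows "kron A B * kron C D = kron (A * C) (B * D)"
proof (rule eq_matI)
  fix p q assume p: "p < dim_row (kron (A * C) (B * D))" and q: "q < dim_col (kron (A * C) (B * D))"
  let ?a = "dim_col A" and ?b = "dim_col B"
  have p': "p < dim_row A * dim_row B" and q': "q < dim_col C * dim_col D" using p q by auto
  have "(kron A B * kron C D) $$ (p,q) = (\<Sum>k<?a * ?b. kron A B $$ (p,k) * kron C D $$ (k,q))"
    using p' q' assms by (simp add: scalar_prod_def lessThan_atLeast0)
  also have "\<dots> = (\<Sum>i<?a. \<Sum>j<?b. kron A B $$ (p,i*?b+j) * kron C D $$ (i*?b+j,q))"
    by (rule sum_mult_split)
  also have "\<dots> = (\<Sum>i<?a. \<Sum>j<?b. (A $$ (p div dim_row B, i) * C $$ (i, q div dim_col D)) *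
                    (B $$ (p mod dim_row B, j) * D $$ (j, q mod dim_col D)))"
  proof (intro sum.cong refl)
    fix i j assume i: "i \<in> {..<?a}" and j: "j \<in> {..<?b}"
    have k: "i * ?b + j < ?a * ?b"
    proof -
      have "i * ?b + j < i * ?b + ?b" using j by simp
      also have "\<dots> = Suc i * ?b" by simp
      also have "\<dots> \<le> ?a * ?b" using i by (intro mult_right_mono) auto
      finally show ?thesis by simp
    qed
    have jD: "j < dim_row D" using j assms by simp
    have dv: "(i * dim_row D + j) div dim_row D = i" and md: "(i * dim_row D + j) mod dim_row D = j" 
      and md2: "j mod dim_row D = j" using jD by auto
    show "kron A B $$ (p,i*?b+j) * kron C D $$ (i*?b+j,q) =
      (A $$ (p div dim_row B, i) * C $$ (i, q div dim_col D)) * (B $$ (p mod dim_row B, j) * D $$ (j, q mod dim_col D))"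
      using p' q' k assms by (simp add: kron_index dv md md2)
  qed
  also have "\<dots> = (\<Sum>i<?a. A $$ (p div dim_row B, i) * C $$ (i, q div dim_col D)) *
                  (\<Sum>j<?b. B $$ (p mod dim_row B, j) * D $$ (j, q mod dim_col D))"
    by (simp add: sum_product)
  also have "\<dots> = kron (A * C) (B * D) $$ (p,q)"
    using p' q' assms by (simp add: kron_index div_lt mod_lt scalar_prod_def lessThan_atLeast0)
  finally show "(kron A B * kron C D) $$ (p,q) = kron (A * C) (B * D) $$ (p,q)" .
qed auto

lemma kron_one: "kron (1\<^sub>m a) (1\<^sub>m b) = 1\<^sub>m (a * b)"
proof (rule eq_matI)
  fix p q assume "p < dim_row (1\<^sub>m (a * b))" "q < dim_col (1\<^sub>m (a * b))"
  hence p: "p < a * b" and q: "q < a * b" by auto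
  have "(p div b = q div b \<and> p mod b = q mod b) = (p = q)"
    by (metis div_mult_mod_eq)
  thus "kron (1\<^sub>m a) (1\<^sub>m b) $$ (p,q) = 1\<^sub>m (a * b) $$ (p,q)"
    using p q by (simp add: kron_index div_lt mod_lt) (metis div_mult_mod_eq)
qed auto

lemma vecm_carrier[simp]: "vecm X \<in> carrier_vec (dim_row X * dim_col X)"
  unfolding vecm_def by simp

lemma vecm_dim[simp]: "dim_vec (vecm X) = dim_row X * dim_col X"
  unfolding vecm_def by simp

lemma kron_vec:
  assumes U: "U \<in> carrier_mat n r" and V: "V \<in> carrier_mat m r" and S: "S \<in> carrier_mat r r"
  shows "kron V U *\<^sub>v vecm S = vecm (U * S * V\<^sup>T)"
proof (rule eq_vecI)
  show "dim_vec (kron V U *\<^sub>v vecm S) = dim_vec (vecm (U * S * V\<^sup>T))" using U V S by simp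
  fix p assume "p < dim_vec (vecm (U * S * V\<^sup>T))"
  hence p: "p < n * m" using U V S by simp
  hence p': "p < m * n" by (simp add: mult.commute)
  have nd: "p div n < m" using p' by (rule div_lt)
  have nm: "p mod n < n" using p' by (rule mod_lt)
  have "(kron V U *\<^sub>v vecm S) $ p = (\<Sum>k<r*r. kron V U $$ (p,k) * vecm S $ k)"
    using U V S p' by (simp add: scalar_prod_def lessThan_atLeast0)
  also have "\<dots> = (\<Sum>a<r. \<Sum>b<r. kron V U $$ (p,a*r+b) * vecm S $ (a*r+b))"
    by (rule sum_mult_split)
  also have "\<dots> = (\<Sum>a<r. \<Sum>b<r. U $$ (p mod n, b) * S $$ (b, a) * V $$ (p div n, a))"
  proof (intro sum.cong refl)
    fix a b assume a: "a \<in> {..<r}" and b: "b \<in> {..<r}"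
    have k: "a * r + b < r * r"
    proof -
      have "a * r + b < a * r + r" using b by simp
      also have "\<dots> = Suc a * r" by simp
      also have "\<dots> \<le> r * r" using a by (intro mult_right_mono) auto
      finally show ?thesis by simp
    qed
    have dv: "(a * r + b) div r = a" and md: "(a * r + b) mod r = b" using b by auto
    show "kron V U $$ (p,a*r+b) * vecm S $ (a*r+b) = U $$ (p mod n, b) * S $$ (b, a) * V $$ (p div n, a)"
      using U V S p' k b by (simp add: kron_index dv md vecm_def)
  qed
  also have "\<dots> = (\<Sum>b<r. U $$ (p mod n, b) * (\<Sum>a<r. S $$ (b, a) * V $$ (p div n, a)))"
    by (subst sum.swap) (simp add: sum_distrib_left mult.assoc)
  also have "\<dots> = (U * S * V\<^sup>T) $$ (p mod n, p div n)"
    using U V S nd nm by (simp add: scalar_prod_def lessThan_atLeast0)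
  also have "\<dots> = vecm (U * S * V\<^sup>T) $ p" using U V S p by (simp add: vecm_def)
  finally show "(kron V U *\<^sub>v vecm S) $ p = vecm (U * S * V\<^sup>T) $ p" .
qed



lemma hcat_four: "A \<in> carrier_mat k a \<Longrightarrow> B \<in> carrier_mat k b \<Longrightarrow>
  hcat A B = four_block_mat A B (0\<^sub>m 0 a) (0\<^sub>m 0 b)"
  unfolding hcat_def by (rule eq_matI) auto

lemma hcat_carrier: "A \<in> carrier_mat k a \<Longrightarrow> B \<in> carrier_mat k b \<Longrightarrow> hcat A B \<in> carrier_mat k (a + b)"
  unfolding hcat_def by auto

lemma append_vec_zero_dim: "w \<in> carrier_vec 0 \<Longrightarrow> v @\<^sub>v w = v"
  by (rule eq_vecI) auto

lemma hcat_mult_vec: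
  fixes A B :: "real mat"
  assumes A: "A \<in> carrier_mat k a" and B: "B \<in> carrier_mat k b" and x: "x \<in> carrier_vec a" and y: "y \<in> carrier_vec b"
  shows "hcat A B *\<^sub>v (x @\<^sub>v y) = A *\<^sub>v x + B *\<^sub>v y"
proof -
  have c: "0\<^sub>m 0 a *\<^sub>v x + 0\<^sub>m 0 b *\<^sub>v y \<in> carrier_vec 0"
    by (rule add_carrier_vec; rule mult_mat_vec_carrier) (use x y in auto)
  show ?thesis
    unfolding hcat_four[OF A B] using four_block_mat_mult_vec[OF A B _ _ x y, of "0\<^sub>m 0 a" 0 "0\<^sub>m 0 b"]
    by (simp add: append_vec_zero_dim[OF c])
qed

lemma bdiag_carrier: "A \<in> carrier_mat ra ca \<Longrightarrow> B \<in> carrier_mat rb cb \<Longrightarrow> bdiag A B \<in> carrier_mat (ra+rb) (ca+cb)"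
  unfolding bdiag_def by auto

lemma bdiag_transpose: "A \<in> carrier_mat ra ca \<Longrightarrow> B \<in> carrier_mat rb cb \<Longrightarrow> (bdiag A B)\<^sup>T = bdiag A\<^sup>T B\<^sup>T"
  unfolding bdiag_def by (subst transpose_four_block_mat[of _ ra ca _ cb _ rb]) auto

lemma bdiag_mult: "A \<in> carrier_mat ra k \<Longrightarrow> B \<in> carrier_mat rb l \<Longrightarrow> C \<in> carrier_mat k ca \<Longrightarrow> D \<in> carrier_mat l cb \<Longrightarrow>
  bdiag A B * bdiag C D = bdiag (A * C) (B * D)"
  unfolding bdiag_def by (subst mult_four_block_mat[of _ ra k _ l _ rb _ _ ca _ cb _ _]) auto

lemma bdiag_mult_vec: "A \<in> carrier_mat ra ca \<Longrightarrow> B \<in> carrier_mat rb cb \<Longrightarrow> x \<in> carrier_vec ca \<Longrightarrow> y \<in> carrier_vec cb \<Longrightarrow>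
  bdiag A B *\<^sub>v (x @\<^sub>v y) = (A *\<^sub>v x) @\<^sub>v (B *\<^sub>v y)"
  unfolding bdiag_def by (subst four_block_mat_mult_vec[of _ ra ca _ cb _ rb]) auto

lemma append_eq_zero: fixes u v :: "real vec" shows "u \<in> carrier_vec k \<Longrightarrow> v \<in> carrier_vec l \<Longrightarrow> u @\<^sub>v v = 0\<^sub>v (k+l) \<Longrightarrow> u = 0\<^sub>v k \<and> v = 0\<^sub>v l"
proof -
  assume u: "u \<in> carrier_vec k" and v: "v \<in> carrier_vec l" and z: "u @\<^sub>v v = 0\<^sub>v (k+l)"
  have "u = 0\<^sub>v k"
  proof (rule eq_vecI)
    fix i assume "i < dim_vec (0\<^sub>v k :: real vec)"
    hence i: "i < k" by simp
    have "(u @\<^sub>v v) $ i = 0" using z i by simp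
    thus "u $ i = 0\<^sub>v k $ i" using u v i by simp
  qed (use u in auto)
  moreover have "v = 0\<^sub>v l"
  proof (rule eq_vecI)
    fix i assume "i < dim_vec (0\<^sub>v l :: real vec)"
    hence i: "i < l" by simp
    have "(u @\<^sub>v v) $ (k + i) = 0" using z i by simp
    thus "v $ i = 0\<^sub>v l $ i" using u v i by simp
  qed (use v in auto)
  ultimately show ?thesis by blast
qed

lemma colmat_carrier: "v \<in> carrier_vec k \<Longrightarrow> colmat v \<in> carrier_mat k 1"
  unfolding colmat_def by auto

lemma colmat_t_vec: "v \<in> carrier_vec k \<Longrightarrow> c \<in> carrier_vec k \<Longrightarrow> (colmat v)\<^sup>T *\<^sub>v c = vec 1 (\<lambda>_. v \<bullet> c)"
  unfolding colmat_def by (rule eq_vecI) (auto simp: scalar_prod_def)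

lemma colmat_tt: "v \<in> carrier_vec k \<Longrightarrow> (colmat v)\<^sup>T * colmat v = mat 1 1 (\<lambda>_. v \<bullet> v)"
  unfolding colmat_def by (rule eq_matI) (auto simp: scalar_prod_def)

lemma bilin: fixes M N :: "real mat" shows "M \<in> carrier_mat k p \<Longrightarrow> N \<in> carrier_mat k q \<Longrightarrow> x \<in> carrier_vec p \<Longrightarrow> y \<in> carrier_vec q \<Longrightarrow>
  (M *\<^sub>v x) \<bullet> (N *\<^sub>v y) = x \<bullet> ((M\<^sup>T * N) *\<^sub>v y)"
proof -
  assume M: "M \<in> carrier_mat k p" and N: "N \<in> carrier_mat k q" and x: "x \<in> carrier_vec p" and y: "y \<in> carrier_vec q"
  have "(M\<^sup>T *\<^sub>v (N *\<^sub>v y)) \<bullet> x = (N *\<^sub>v y) \<bullet> (M *\<^sub>v x)"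
    by (rule transpose_vec_mult_scalar[OF M x], use N y in auto)
  hence "(M *\<^sub>v x) \<bullet> (N *\<^sub>v y) = x \<bullet> (M\<^sup>T *\<^sub>v (N *\<^sub>v y))"
    using comm_scalar_prod[of "M *\<^sub>v x" k "N *\<^sub>v y"] comm_scalar_prod[of x p "M\<^sup>T *\<^sub>v (N *\<^sub>v y)"] M N x y by auto
  also have "M\<^sup>T *\<^sub>v (N *\<^sub>v y) = (M\<^sup>T * N) *\<^sub>v y" using M N y by (simp add: assoc_mult_mat_vec[of _ p k _ q])
  finally show ?thesis .
qed



lemma kron_carrier'[simp]: "A \<in> carrier_mat ra ca \<Longrightarrow> B \<in> carrier_mat rb cb \<Longrightarrow> kron A B \<in> carrier_mat (ra*rb) (ca*cb)"
  unfolding kron_def by auto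

lemma mult_zero_vec_r[simp]: "(A::real mat) \<in> carrier_mat nr nc \<Longrightarrow> A *\<^sub>v 0\<^sub>v nc = 0\<^sub>v nr"
  by (rule eq_vecI) (auto simp: scalar_prod_def)

lemma E_facts:
  fixes U V S :: "real mat" and a b c :: "real vec"
  assumes U: "U \<in> carrier_mat n r" and V: "V \<in> carrier_mat m r" and S: "S \<in> carrier_mat r r"
    and UU: "U\<^sup>T * U = 1\<^sub>m r" and VV: "V\<^sup>T * V = 1\<^sub>m r"
    and a: "a \<in> carrier_vec (r*n)" and b: "b \<in> carrier_vec (m*r)" and c: "c \<in> carrier_vec (r*r)"
    and ha: "(kron (1\<^sub>m r) U)\<^sup>T *\<^sub>v a = 0\<^sub>v (r*r)"
    and hb: "(kron V (1\<^sub>m r))\<^sup>T *\<^sub>v b = 0\<^sub>v (r*r)"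
    and hc: "vecm S \<bullet> c = 0"
  shows "(Emat U V *\<^sub>v ((a @\<^sub>v b) @\<^sub>v c)) \<bullet> (Emat U V *\<^sub>v ((a @\<^sub>v b) @\<^sub>v c)) = a \<bullet> a + b \<bullet> b + c \<bullet> c"
    and "(Emat U V *\<^sub>v ((a @\<^sub>v b) @\<^sub>v c)) \<bullet> (kron V U *\<^sub>v vecm S) = 0"
proof -
  define Ev where "Ev = kron V (1\<^sub>m n)"
  define Eu where "Eu = kron (1\<^sub>m m) U"
  define Evu where "Evu = kron V U"
  define Bv where "Bv = kron (1\<^sub>m r) U"
  define Bu where "Bu = kron V (1\<^sub>m r)"
  have Ev: "Ev \<in> carrier_mat (m*n) (r*n)" unfolding Ev_def using V by simp
  have Eu: "Eu \<in> carrier_mat (m*n) (m*r)" unfolding Eu_def using U by simp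
  have Evu: "Evu \<in> carrier_mat (m*n) (r*r)" unfolding Evu_def using U V by simp
  have Bv: "Bv \<in> carrier_mat (r*n) (r*r)" unfolding Bv_def using U by simp
  have Bu: "Bu \<in> carrier_mat (m*r) (r*r)" unfolding Bu_def using V by simp
  have s: "vecm S \<in> carrier_vec (r*r)" using S by (metis carrier_matD vecm_carrier)
  have E: "Emat U V = hcat (hcat Ev Eu) Evu" unfolding Emat_def Ev_def Eu_def Evu_def using U V by simp
  have z: "Emat U V *\<^sub>v ((a @\<^sub>v b) @\<^sub>v c) = Ev *\<^sub>v a + Eu *\<^sub>v b + Evu *\<^sub>v c"
    unfolding E using Ev Eu Evu a b c
    by (simp add: hcat_mult_vec[of _ "m*n" "r*n" _ "m*r"] hcat_mult_vec[of _ "m*n" "r*n+m*r" _ "r*r"] hcat_carrier)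
  have tEvEv: "Ev\<^sup>T * Ev = 1\<^sub>m (r*n)" unfolding Ev_def kron_transpose using V VV
    by (simp add: kron_mult kron_one)
  have tEuEu: "Eu\<^sup>T * Eu = 1\<^sub>m (m*r)" unfolding Eu_def kron_transpose using U UU
    by (simp add: kron_mult kron_one)
  have tEvuEvu: "Evu\<^sup>T * Evu = 1\<^sub>m (r*r)" unfolding Evu_def kron_transpose using U UU V VV
    by (simp add: kron_mult kron_one)
  have tEvEu: "Ev\<^sup>T * Eu = Bv * Bu\<^sup>T" unfolding Ev_def Eu_def Bv_def Bu_def kron_transpose using U V
    by (simp add: kron_mult)
  have tEvEvu: "Ev\<^sup>T * Evu = Bv" unfolding Ev_def Evu_def Bv_def kron_transpose using U V VV
    by (simp add: kron_mult)
  have tEuEvu: "Eu\<^sup>T * Evu = Bu" unfolding Eu_def Evu_def Bu_def kron_transpose using U V UU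
    by (simp add: kron_mult)
  have ha': "Bv\<^sup>T *\<^sub>v a = 0\<^sub>v (r*r)" using ha unfolding Bv_def .
  have hb': "Bu\<^sup>T *\<^sub>v b = 0\<^sub>v (r*r)" using hb unfolding Bu_def .
  have pvv: "(Ev *\<^sub>v a) \<bullet> (Ev *\<^sub>v a) = a \<bullet> a" using bilin[OF Ev Ev a a] tEvEv a by simp
  have puu: "(Eu *\<^sub>v b) \<bullet> (Eu *\<^sub>v b) = b \<bullet> b" using bilin[OF Eu Eu b b] tEuEu b by simp
  have pss: "\<And>d::real vec. d \<in> carrier_vec (r*r) \<Longrightarrow> (Evu *\<^sub>v c) \<bullet> (Evu *\<^sub>v d) = c \<bullet> d"
    using bilin[OF Evu Evu c] tEvuEvu c by simp
  have pvu: "(Ev *\<^sub>v a) \<bullet> (Eu *\<^sub>v b) = 0"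
  proof -
    have "(Ev *\<^sub>v a) \<bullet> (Eu *\<^sub>v b) = a \<bullet> ((Bv * Bu\<^sup>T) *\<^sub>v b)" using bilin[OF Ev Eu a b] tEvEu by simp
    also have "(Bv * Bu\<^sup>T) *\<^sub>v b = Bv *\<^sub>v (Bu\<^sup>T *\<^sub>v b)" using Bv Bu b by (simp add: assoc_mult_mat_vec[of _ "r*n" "r*r" _ "m*r"])
    also have "\<dots> = 0\<^sub>v (r*n)" using hb' Bv by simp
    finally show ?thesis using a by simp
  qed
  have pvs: "\<And>d::real vec. d \<in> carrier_vec (r*r) \<Longrightarrow> (Ev *\<^sub>v a) \<bullet> (Evu *\<^sub>v d) = 0"
  proof -
    fix d :: "real vec" assume d: "d \<in> carrier_vec (r*r)"
    have "(Ev *\<^sub>v a) \<bullet> (Evu *\<^sub>v d) = a \<bullet> (Bv *\<^sub>v d)" using bilin[OF Ev Evu a d] tEvEvu by simp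
    also have "\<dots> = (Bv\<^sup>T *\<^sub>v a) \<bullet> d" using transpose_vec_mult_scalar[OF Bv d a] by simp
    finally show "(Ev *\<^sub>v a) \<bullet> (Evu *\<^sub>v d) = 0" using ha' d by simp
  qed
  have pus: "\<And>d::real vec. d \<in> carrier_vec (r*r) \<Longrightarrow> (Eu *\<^sub>v b) \<bullet> (Evu *\<^sub>v d) = 0"
  proof -
    fix d :: "real vec" assume d: "d \<in> carrier_vec (r*r)"
    have "(Eu *\<^sub>v b) \<bullet> (Evu *\<^sub>v d) = b \<bullet> (Bu *\<^sub>v d)" using bilin[OF Eu Evu b d] tEuEvu by simp
    also have "\<dots> = (Bu\<^sup>T *\<^sub>v b) \<bullet> d" using transpose_vec_mult_scalar[OF Bu d b] by simp
    finally show "(Eu *\<^sub>v b) \<bullet> (Evu *\<^sub>v d) = 0" using hb' d by simp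
  qed
  have cv1: "Ev *\<^sub>v a \<in> carrier_vec (m*n)" using Ev a by simp
  have cv2: "Eu *\<^sub>v b \<in> carrier_vec (m*n)" using Eu b by simp
  have cv3: "\<And>d::real vec. d \<in> carrier_vec (r*r) \<Longrightarrow> Evu *\<^sub>v d \<in> carrier_vec (m*n)" using Evu by simp
  have sym1: "(Eu *\<^sub>v b) \<bullet> (Ev *\<^sub>v a) = 0" using pvu comm_scalar_prod[OF cv1 cv2] by simp
  have sym2: "(Evu *\<^sub>v c) \<bullet> (Ev *\<^sub>v a) = 0" using pvs[OF c] comm_scalar_prod[OF cv1 cv3[OF c]] by simp
  have sym3: "(Evu *\<^sub>v c) \<bullet> (Eu *\<^sub>v b) = 0" using pus[OF c] comm_scalar_prod[OF cv2 cv3[OF c]] by simp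
  show "(Emat U V *\<^sub>v ((a @\<^sub>v b) @\<^sub>v c)) \<bullet> (Emat U V *\<^sub>v ((a @\<^sub>v b) @\<^sub>v c)) = a \<bullet> a + b \<bullet> b + c \<bullet> c"
    unfolding z using cv1 cv2 cv3[OF c] pvv puu pss[OF c] pvu pvs[OF c] pus[OF c] sym1 sym2 sym3
    by (simp add: add_scalar_prod_distrib[of _ "m*n"] scalar_prod_add_distrib[of _ "m*n"])
  have "vecm S \<bullet> c = c \<bullet> vecm S" using comm_scalar_prod[OF s c] .
  show "(Emat U V *\<^sub>v ((a @\<^sub>v b) @\<^sub>v c)) \<bullet> (kron V U *\<^sub>v vecm S) = 0"
    unfolding z Evu_def[symmetric] using cv1 cv2 cv3[OF c] cv3[OF s] pvs[OF s] pus[OF s] pss[OF s] hc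
      comm_scalar_prod[OF s c]
    by (simp add: add_scalar_prod_distrib[of _ "m*n"])
qed



lemma bdiag_one: "bdiag (1\<^sub>m a) (1\<^sub>m b) = 1\<^sub>m (a + b)"
  unfolding bdiag_def by simp

lemma B_orth:
  fixes U V S :: "real mat"
  assumes U: "U \<in> carrier_mat n r" and V: "V \<in> carrier_mat m r" and S: "S \<in> carrier_mat r r"
    and UU: "U\<^sup>T * U = 1\<^sub>m r" and VV: "V\<^sup>T * V = 1\<^sub>m r" and ss: "vecm S \<bullet> vecm S = 1"
  shows "Bmat U S V \<in> carrier_mat (r*n + m*r + r*r) (r*r + r*r + 1)"
    and "(Bmat U S V)\<^sup>T * Bmat U S V = 1\<^sub>m (r*r + r*r + 1)"
proof -
  define Bv where "Bv = kron (1\<^sub>m r) U"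
  define Bu where "Bu = kron V (1\<^sub>m r)"
  define cs where "cs = colmat (vecm S)"
  have Bv: "Bv \<in> carrier_mat (r*n) (r*r)" unfolding Bv_def using U by simp
  have Bu: "Bu \<in> carrier_mat (m*r) (r*r)" unfolding Bu_def using V by simp
  have s: "vecm S \<in> carrier_vec (r*r)" using S by (metis carrier_matD vecm_carrier)
  have cs: "cs \<in> carrier_mat (r*r) 1" unfolding cs_def using colmat_carrier[OF s] .
  have B: "Bmat U S V = bdiag (bdiag Bv Bu) cs" unfolding Bmat_def Bv_def Bu_def cs_def using U by simp
  show "Bmat U S V \<in> carrier_mat (r*n + m*r + r*r) (r*r + r*r + 1)"
    unfolding B by (intro bdiag_carrier Bv Bu cs)
  have tv: "Bv\<^sup>T * Bv = 1\<^sub>m (r*r)" unfolding Bv_def kron_transpose using U UU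
    by (simp add: kron_mult kron_one)
  have tu: "Bu\<^sup>T * Bu = 1\<^sub>m (r*r)" unfolding Bu_def kron_transpose using V VV
    by (simp add: kron_mult kron_one)
  have tc: "cs\<^sup>T * cs = 1\<^sub>m 1" unfolding cs_def colmat_tt[OF s] ss by (rule eq_matI) auto
  have "(Bmat U S V)\<^sup>T * Bmat U S V = bdiag (bdiag (Bv\<^sup>T * Bv) (Bu\<^sup>T * Bu)) (cs\<^sup>T * cs)"
    unfolding B using Bv Bu cs
    by (simp add: bdiag_transpose[of _ "r*n+m*r" "r*r+r*r" _ "r*r" 1] bdiag_transpose[of _ "r*n" "r*r" _ "m*r" "r*r"]
        bdiag_carrier bdiag_mult[of _ "r*r+r*r" "r*n+m*r" _ "1" "r*r" _ "r*r+r*r" _ 1]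
        bdiag_mult[of _ "r*r" "r*n" _ "r*r" "m*r" _ "r*r" _ "r*r"])
  thus "(Bmat U S V)\<^sup>T * Bmat U S V = 1\<^sub>m (r*r + r*r + 1)" unfolding tv tu tc bdiag_one .
qed

lemma B_W:
  fixes U V S :: "real mat" and \<tau> :: "real vec"
  assumes U: "U \<in> carrier_mat n r" and V: "V \<in> carrier_mat m r" and S: "S \<in> carrier_mat r r"
    and t: "\<tau> \<in> carrier_vec (r*n + m*r + r*r)"
    and W: "(Bmat U S V)\<^sup>T *\<^sub>v \<tau> = 0\<^sub>v (dim_col (Bmat U S V))"
  shows "\<exists>a b c. a \<in> carrier_vec (r*n) \<and> b \<in> carrier_vec (m*r) \<and> c \<in> carrier_vec (r*r) \<and>
    \<tau> = (a @\<^sub>v b) @\<^sub>v c \<and> (kron (1\<^sub>m r) U)\<^sup>T *\<^sub>v a = 0\<^sub>v (r*r) \<and>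
    (kron V (1\<^sub>m r))\<^sup>T *\<^sub>v b = 0\<^sub>v (r*r) \<and> vecm S \<bullet> c = 0"
proof -
  define Bv where "Bv = kron (1\<^sub>m r) U"
  define Bu where "Bu = kron V (1\<^sub>m r)"
  define cs where "cs = colmat (vecm S)"
  have Bv: "Bv \<in> carrier_mat (r*n) (r*r)" unfolding Bv_def using U by simp
  have Bu: "Bu \<in> carrier_mat (m*r) (r*r)" unfolding Bu_def using V by simp
  have s: "vecm S \<in> carrier_vec (r*r)" using S by (metis carrier_matD vecm_carrier)
  have cs: "cs \<in> carrier_mat (r*r) 1" unfolding cs_def using colmat_carrier[OF s] .
  have B: "Bmat U S V = bdiag (bdiag Bv Bu) cs" unfolding Bmat_def Bv_def Bu_def cs_def using U by simp
  have dc: "dim_col (Bmat U S V) = (r*r + r*r) + 1" unfolding B bdiag_def using Bv Bu cs by simp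
  define d where "d = vec_first \<tau> (r*n + m*r)"
  define c where "c = vec_last \<tau> (r*r)"
  define a where "a = vec_first d (r*n)"
  define b where "b = vec_last d (m*r)"
  have a: "a \<in> carrier_vec (r*n)" and b: "b \<in> carrier_vec (m*r)" and c: "c \<in> carrier_vec (r*r)"
    and d: "d \<in> carrier_vec (r*n + m*r)"
    unfolding a_def b_def c_def d_def by auto
  have td: "\<tau> = d @\<^sub>v c" unfolding d_def c_def using t by simp
  have dab: "d = a @\<^sub>v b" unfolding a_def b_def using d by simp
  have "(Bmat U S V)\<^sup>T *\<^sub>v \<tau> = ((Bv\<^sup>T *\<^sub>v a) @\<^sub>v (Bu\<^sup>T *\<^sub>v b)) @\<^sub>v (cs\<^sup>T *\<^sub>v c)"
    unfolding B td dab using Bv Bu cs a b c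
    by (simp add: bdiag_transpose[of _ "r*n+m*r" "r*r+r*r" _ "r*r" 1] bdiag_transpose[of _ "r*n" "r*r" _ "m*r" "r*r"]
        bdiag_carrier bdiag_mult_vec[of _ "r*r+r*r" "r*n+m*r" _ 1 "r*r"] bdiag_mult_vec[of _ "r*r" "r*n" _ "r*r" "m*r"])
  hence z: "((Bv\<^sup>T *\<^sub>v a) @\<^sub>v (Bu\<^sup>T *\<^sub>v b)) @\<^sub>v (cs\<^sup>T *\<^sub>v c) = 0\<^sub>v ((r*r + r*r) + 1)" using W dc by simp
  have c1: "(Bv\<^sup>T *\<^sub>v a) @\<^sub>v (Bu\<^sup>T *\<^sub>v b) \<in> carrier_vec (r*r + r*r)"
    by (rule append_carrier_vec) (use Bv Bu a b in auto)
  have c2: "cs\<^sup>T *\<^sub>v c \<in> carrier_vec 1"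
    by (rule mult_mat_vec_carrier) (use cs c in auto)
  from append_eq_zero[OF c1 c2 z] have z1: "(Bv\<^sup>T *\<^sub>v a) @\<^sub>v (Bu\<^sup>T *\<^sub>v b) = 0\<^sub>v (r*r + r*r)"
    and z2: "cs\<^sup>T *\<^sub>v c = 0\<^sub>v 1" by auto
  have ca: "Bv\<^sup>T *\<^sub>v a \<in> carrier_vec (r*r)" by (rule mult_mat_vec_carrier) (use Bv a in auto)
  have cb: "Bu\<^sup>T *\<^sub>v b \<in> carrier_vec (r*r)" by (rule mult_mat_vec_carrier) (use Bu b in auto)
  from append_eq_zero[OF ca cb z1] have za: "Bv\<^sup>T *\<^sub>v a = 0\<^sub>v (r*r)" and zb: "Bu\<^sup>T *\<^sub>v b = 0\<^sub>v (r*r)" by auto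
  have "vec 1 (\<lambda>_. vecm S \<bullet> c) $ 0 = 0\<^sub>v 1 $ 0" using z2 unfolding cs_def colmat_t_vec[OF s c] by simp
  hence zc: "vecm S \<bullet> c = 0" by simp
  show ?thesis using a b c za zb zc td dab unfolding Bv_def Bu_def by blast
qed



lemma quad_upper:
  fixes A :: "real mat"
  assumes A: "A \<in> carrier_mat n n" and sym: "A\<^sup>T = A" and cp: "char_poly A = (\<Prod>l \<leftarrow> ls. [:- l, 1:])"
  shows "\<exists>K. \<forall>y \<in> carrier_vec n. y \<bullet> (A *\<^sub>v y) \<le> K * (y \<bullet> y)"
proof -
  from spectral_split[OF A sym cp] obtain Q where Q: "Q \<in> carrier_mat n n"
    and o2: "Q * Q\<^sup>T = 1\<^sub>m n" and D: "Q\<^sup>T * A * Q = dmat ls"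
    and len: "length ls = n" by blast
  define K where "K = (\<Sum>i<n. \<bar>ls ! i\<bar>)"
  have Ki: "\<And>i. i < n \<Longrightarrow> ls ! i \<le> K"
  proof -
    fix i assume i: "i < n"
    have "\<bar>ls ! i\<bar> \<le> K" unfolding K_def using i by (intro member_le_sum) auto
    thus "ls ! i \<le> K" by linarith
  qed
  have "\<forall>y \<in> carrier_vec n. y \<bullet> (A *\<^sub>v y) \<le> K * (y \<bullet> y)"
  proof
    fix y :: "real vec" assume y: "y \<in> carrier_vec n"
    note qr = quad_rep[OF A Q o2 D len y]
    have "(\<Sum>i<n. ls ! i * (col Q i \<bullet> y)^2) \<le> (\<Sum>i<n. K * (col Q i \<bullet> y)^2)"
      by (intro sum_mono mult_right_mono Ki) auto
    also have "\<dots> = K * (y \<bullet> y)" unfolding sum_distrib_left[symmetric] qr(2) ..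
    finally show "y \<bullet> (A *\<^sub>v y) \<le> K * (y \<bullet> y)" using qr(1) by simp
  qed
  thus ?thesis by blast
qed

lemma eig_exists:
  fixes M :: "real mat"
  assumes M: "M \<in> carrier_mat n n" and sym: "M\<^sup>T = M" and w: "w \<in> carrier_vec n" and nz: "w \<bullet> (M *\<^sub>v w) \<noteq> 0"
  shows "\<exists>v \<mu>. v \<in> carrier_vec n \<and> v \<noteq> 0\<^sub>v n \<and> \<mu> \<noteq> 0 \<and> M *\<^sub>v v = \<mu> \<cdot>\<^sub>v v"
proof -
  from sym_split[OF M sym] obtain es where cp: "char_poly M = (\<Prod>e \<leftarrow> es. [:- e, 1:])" by blast
  from spectral_split[OF M sym cp] obtain Q where Q: "Q \<in> carrier_mat n n"
    and o1: "Q\<^sup>T * Q = 1\<^sub>m n" and o2: "Q * Q\<^sup>T = 1\<^sub>m n" and D: "Q\<^sup>T * M * Q = dmat es"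
    and len: "length es = n" by blast
  note qr = quad_rep[OF M Q o2 D len w]
  obtain i where i: "i < n" and ei: "es ! i \<noteq> 0"
  proof (rule ccontr)
    assume "\<not> thesis"
    hence "\<forall>i<n. es ! i = 0" using that by blast
    hence "w \<bullet> (M *\<^sub>v w) = 0" using qr(1) by simp
    thus False using nz by simp
  qed
  have Dc: "dmat es \<in> carrier_mat n n" unfolding dmat_def using len by simp
  have "Q * dmat es * Q\<^sup>T = (Q * Q\<^sup>T) * M * (Q * Q\<^sup>T)" unfolding D[symmetric] using M Q
    by (simp add: assoc_mult_mat[of _ n n _ n _ n])
  hence MD: "M = Q * dmat es * Q\<^sup>T" unfolding o2 using M by simp
  have MQ: "M * Q = Q * dmat es" unfolding MD using Q Dc o1
    by (simp add: assoc_mult_mat[of _ n n _ n _ n])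
  define v where "v = col Q i"
  have v: "v \<in> carrier_vec n" unfolding v_def using Q by (auto intro!: carrier_vecI)
  have "M *\<^sub>v v = col (M * Q) i" unfolding v_def by (rule col_mult2[symmetric]) (use M Q i in auto)
  also have "\<dots> = col (Q * dmat es) i" unfolding MQ ..
  also have "\<dots> = es ! i \<cdot>\<^sub>v v"
  proof (rule eq_vecI)
    fix k assume "k < dim_vec (es ! i \<cdot>\<^sub>v v)"
    hence k: "k < n" using v by simp
    have "col (Q * dmat es) i $ k = (\<Sum>j\<in>{0..<n}. Q $$ (k,j) * (if j = i then es ! i else 0))"
      using Q Dc k i len by (simp add: scalar_prod_def dmat_def cong: if_cong)
    also have "\<dots> = (\<Sum>j\<in>{0..<n}. if j = i then Q $$ (k,j) * es ! i else 0)" by (rule sum.cong) auto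
    also have "\<dots> = Q $$ (k,i) * es ! i" using i by simp
    finally show "col (Q * dmat es) i $ k = (es ! i \<cdot>\<^sub>v v) $ k" using k i Q v unfolding v_def by simp
  qed (use Q Dc v i in auto)
  finally have ev: "M *\<^sub>v v = es ! i \<cdot>\<^sub>v v" .
  have "v \<bullet> v = 1"
  proof -
    have "(Q\<^sup>T * Q) $$ (i,i) = col Q i \<bullet> col Q i" using Q i by simp
    thus ?thesis using o1 i unfolding v_def by simp
  qed
  hence "v \<noteq> 0\<^sub>v n" by auto
  thus ?thesis using v ei ev by blast
qed

lemma eigs_finite:
  fixes M :: "real mat"
  assumes M: "M \<in> carrier_mat n n" and W: "W \<subseteq> carrier_vec n"
  shows "finite (restr_eigs M W)"
proof -
  have "restr_eigs M W \<subseteq> {x. poly (char_poly M) x = 0}"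
  proof
    fix \<mu> assume "\<mu> \<in> restr_eigs M W"
    then obtain w where "w \<in> W" "w \<noteq> 0\<^sub>v (dim_col M)" "M *\<^sub>v w = \<mu> \<cdot>\<^sub>v w" unfolding restr_eigs_def by blast
    hence "eigenvector M w \<mu>" unfolding eigenvector_def using W M by auto
    hence "eigenvalue M \<mu>" unfolding eigenvalue_def by blast
    thus "\<mu> \<in> {x. poly (char_poly M) x = 0}" using eigenvalue_root_char_poly[OF M] by simp
  qed
  moreover have "char_poly M \<noteq> 0" using degree_monic_char_poly[OF M] by auto
  ultimately show ?thesis using poly_roots_finite finite_subset by blast
qed



lemma pos_sq: fixes y :: "real vec" assumes y: "y \<in> carrier_vec k" and nz: "y \<noteq> 0\<^sub>v k" shows "y \<bullet> y > 0"
proof -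
  have "y \<bullet> y \<ge> 0" by (simp add: scalar_prod_def sum_nonneg)
  moreover have "y \<bullet> y \<noteq> 0"
  proof
    assume "y \<bullet> y = 0"
    hence "\<forall>i<k. y $ i = 0" using y unfolding scalar_prod_def
      by (subst (asm) sum_nonneg_eq_0_iff) auto
    hence "y = 0\<^sub>v k" using y by (intro eq_vecI) auto
    thus False using nz by blast
  qed
  ultimately show ?thesis by linarith
qed

lemma quad_pull:
  fixes E C :: "real mat"
  assumes E: "E \<in> carrier_mat k p" and C: "C \<in> carrier_mat k k" and t: "t \<in> carrier_vec p"
  shows "t \<bullet> ((E\<^sup>T * C * E) *\<^sub>v t) = (E *\<^sub>v t) \<bullet> (C *\<^sub>v (E *\<^sub>v t))"
proof -
  have "(E\<^sup>T * C * E) *\<^sub>v t = E\<^sup>T *\<^sub>v (C *\<^sub>v (E *\<^sub>v t))" using E C t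
    by (simp add: assoc_mult_mat_vec[of _ p k _ p] assoc_mult_mat_vec[of _ k k _ p]
        assoc_mult_mat_vec[of _ p k _ k])
  moreover have "(E\<^sup>T *\<^sub>v (C *\<^sub>v (E *\<^sub>v t))) \<bullet> t = (C *\<^sub>v (E *\<^sub>v t)) \<bullet> (E *\<^sub>v t)"
    by (rule transpose_vec_mult_scalar[OF E t]) (use C E t in auto)
  ultimately show ?thesis using comm_scalar_prod[of t p "E\<^sup>T *\<^sub>v (C *\<^sub>v (E *\<^sub>v t))"]
    comm_scalar_prod[of "C *\<^sub>v (E *\<^sub>v t)" k "E *\<^sub>v t"] E C t by auto
qed

lemma tau_lemma:
  fixes U V S C :: "real mat" and \<tau> :: "real vec"
  assumes U: "U \<in> carrier_mat n r" and V: "V \<in> carrier_mat m r" and S: "S \<in> carrier_mat r r"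
    and UU: "U\<^sup>T * U = 1\<^sub>m r" and VV: "V\<^sup>T * V = 1\<^sub>m r"
    and C: "C \<in> carrier_mat (n*m) (n*m)"
    and t: "\<tau> \<in> carrier_vec (n*r + m*r + r*r)"
    and W: "(Bmat U S V)\<^sup>T *\<^sub>v \<tau> = 0\<^sub>v (dim_col (Bmat U S V))"
  shows "Emat U V *\<^sub>v \<tau> \<in> carrier_vec (n*m)"
    and "(Emat U V *\<^sub>v \<tau>) \<bullet> (Emat U V *\<^sub>v \<tau>) = \<tau> \<bullet> \<tau>"
    and "(Emat U V *\<^sub>v \<tau>) \<bullet> (kron V U *\<^sub>v vecm S) = 0"
    and "\<tau> \<bullet> (((Emat U V)\<^sup>T * C * Emat U V) *\<^sub>v \<tau>) = (Emat U V *\<^sub>v \<tau>) \<bullet> (C *\<^sub>v (Emat U V *\<^sub>v \<tau>))"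
proof -
  have t': "\<tau> \<in> carrier_vec (r*n + m*r + r*r)" using t by (simp add: mult.commute)
  from B_W[OF U V S t' W] obtain a b c where a: "a \<in> carrier_vec (r*n)" and b: "b \<in> carrier_vec (m*r)"
    and c: "c \<in> carrier_vec (r*r)" and td: "\<tau> = (a @\<^sub>v b) @\<^sub>v c"
    and ha: "(kron (1\<^sub>m r) U)\<^sup>T *\<^sub>v a = 0\<^sub>v (r*r)" and hb: "(kron V (1\<^sub>m r))\<^sup>T *\<^sub>v b = 0\<^sub>v (r*r)"
    and hc: "vecm S \<bullet> c = 0" by blast
  note ef = E_facts[OF U V S UU VV a b c ha hb hc]
  have Ec: "Emat U V \<in> carrier_mat (n*m) (n*r + m*r + r*r)"
  proof -
    have "Emat U V \<in> carrier_mat (m*n) (r*n + m*r + r*r)" unfolding Emat_def using U V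
      by (intro hcat_carrier) (auto simp: kron_carrier')
    thus ?thesis by (simp add: mult.commute)
  qed
  show "Emat U V *\<^sub>v \<tau> \<in> carrier_vec (n*m)" using Ec t by simp
  have "\<tau> \<bullet> \<tau> = a \<bullet> a + b \<bullet> b + c \<bullet> c" unfolding td using a b c
    by (simp add: scalar_prod_append[of _ "r*n+m*r" _ "r*r"] scalar_prod_append[of _ "r*n" _ "m*r"])
  thus "(Emat U V *\<^sub>v \<tau>) \<bullet> (Emat U V *\<^sub>v \<tau>) = \<tau> \<bullet> \<tau>" using ef(1) td by simp
  show "(Emat U V *\<^sub>v \<tau>) \<bullet> (kron V U *\<^sub>v vecm S) = 0" using ef(2) td by simp
  show "\<tau> \<bullet> (((Emat U V)\<^sup>T * C * Emat U V) *\<^sub>v \<tau>) = (Emat U V *\<^sub>v \<tau>) \<bullet> (C *\<^sub>v (Emat U V *\<^sub>v \<tau>))"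
    by (rule quad_pull[OF Ec C t])
qed



lemma smult_one_mult_vec: fixes y :: "real vec" assumes y: "y \<in> carrier_vec k"
  shows "(c \<cdot>\<^sub>m 1\<^sub>m k) *\<^sub>v y = c \<cdot>\<^sub>v y"
proof (rule eq_vecI)
  fix i assume "i < dim_vec (c \<cdot>\<^sub>v y)"
  hence i: "i < k" using y by simp
  have "((c \<cdot>\<^sub>m 1\<^sub>m k) *\<^sub>v y) $ i = (\<Sum>j\<in>{0..<k}. c * (if j = i then 1 else 0) * y $ j)"
    using i y by (simp add: scalar_prod_def cong: if_cong)
  also have "\<dots> = (\<Sum>j\<in>{0..<k}. if i = j then c * y $ j else 0)" by (rule sum.cong) auto
  also have "\<dots> = c * y $ i" using i by simp
  finally show "((c \<cdot>\<^sub>m 1\<^sub>m k) *\<^sub>v y) $ i = (c \<cdot>\<^sub>v y) $ i" using i y by simp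
qed (use y in auto)

theorem mainTheorem4:
  fixes n m r :: nat and A X U S V :: "real mat" and ls :: "real list"
  assumes A_carr: "A \<in> carrier_mat (n*m) (n*m)"
    and A_sym: "A\<^sup>T = A"
    and eig: "length ls = n*m" "sorted ls"
      "char_poly A = (\<Prod>l \<leftarrow> ls. [:- l, 1:])"
    and X_carr: "X \<in> carrier_mat n m"
    and x_norm: "vecm X \<bullet> vecm X = 1"
    and U_carr: "U \<in> carrier_mat n r" and V_carr: "V \<in> carrier_mat m r"
    and S_carr: "S \<in> carrier_mat r r"
    and U_orth: "U\<^sup>T * U = 1\<^sub>m r" and V_orth: "V\<^sup>T * V = 1\<^sub>m r"
    and S_diag: "\<forall>i<r. \<forall>j<r. i \<noteq> j \<longrightarrow> S $$ (i,j) = 0"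
    and S_pos: "\<forall>i<r. S $$ (i,i) > 0"
    and svd: "X = U * S * V\<^sup>T"
  defines "x \<equiv> vecm X"
    and "C \<equiv> A - rayleigh A (vecm X) \<cdot>\<^sub>m 1\<^sub>m (n*m)"
    and "E \<equiv> Emat U V"
    and "B \<equiv> Bmat U S V"
    and "N \<equiv> n*r + m*r + r*r"
    and "Cloc \<equiv> (Emat U V)\<^sup>T * (A - rayleigh A (vecm X) \<cdot>\<^sub>m 1\<^sub>m (n*m)) * Emat U V"
    and "W \<equiv> {\<tau> \<in> carrier_vec (n*r + m*r + r*r). (Bmat U S V)\<^sup>T *\<^sub>v \<tau> = 0\<^sub>v (dim_col (Bmat U S V))}"
    and "lam1 \<equiv> ls ! 0" and "lam2 \<equiv> ls ! 1"
  shows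
    "(\<forall>\<tau> \<in> W. \<tau> \<noteq> 0\<^sub>v N \<longrightarrow>
        (let z = E *\<^sub>v \<tau> in
           z \<noteq> 0\<^sub>v (n*m) \<and> z \<bullet> x = 0 \<and> sqrt (z \<bullet> z) = sqrt (\<tau> \<bullet> \<tau>)
           \<and> \<tau> \<bullet> (Cloc *\<^sub>v \<tau>) = z \<bullet> (C *\<^sub>v z)
           \<and> (\<tau> \<bullet> (Cloc *\<^sub>v \<tau>)) / (\<tau> \<bullet> \<tau>) \<in>
               {Inf (perp_quotients C x) .. Sup (perp_quotients C x)})
        \<and> \<tau> \<bullet> (Cloc *\<^sub>v \<tau>) \<ge> (lam1 + lam2 - 2 * rayleigh A x) * (\<tau> \<bullet> \<tau>))
     \<and> (rayleigh A x < (lam1 + lam2) / 2 \<longrightarrow>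
        (\<forall>\<tau> \<in> W. \<tau> \<noteq> 0\<^sub>v N \<longrightarrow> \<tau> \<bullet> (Cloc *\<^sub>v \<tau>) > 0)
        \<and> (W \<noteq> {0\<^sub>v N} \<longrightarrow>
            restr_cond ((1\<^sub>m N - B * B\<^sup>T) * Cloc * (1\<^sub>m N - B * B\<^sup>T)) W
              \<le> Sup (perp_quotients C x) / Inf (perp_quotients C x)))"
proof -
  note U = U_carr and V = V_carr and S = S_carr and UU = U_orth and VV = V_orth
  have dX: "dim_row X = n" "dim_col X = m" using X_carr by auto
  have x: "x \<in> carrier_vec (n*m)" unfolding x_def using vecm_carrier[of X] dX by simp
  have xx: "x \<bullet> x = 1" using x_norm unfolding x_def .
  have s: "vecm S \<in> carrier_vec (r*r)" using S by (metis carrier_matD vecm_carrier)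
  have xk: "x = kron V U *\<^sub>v vecm S" unfolding x_def svd using kron_vec[OF U V S] by simp
  have KK: "(kron V U)\<^sup>T * kron V U = 1\<^sub>m (r*r)" unfolding kron_transpose using U V UU VV
    by (simp add: kron_mult kron_one)
  have Kc: "kron V U \<in> carrier_mat (m*n) (r*r)" using U V by (simp add: kron_carrier')
  have ss: "vecm S \<bullet> vecm S = 1"
    using bilin[OF Kc Kc s s] KK xx xk s by simp
  define R where "R = rayleigh A x"
  have RR: "rayleigh A (vecm X) = R" unfolding R_def x_def ..
  have Rx: "R = x \<bullet> (A *\<^sub>v x)" unfolding R_def rayleigh_def ..
  have Cc: "C \<in> carrier_mat (n*m) (n*m)" unfolding C_def by (intro minus_carrier_mat smult_carrier_mat one_carrier_mat)
  have st: "(rayleigh A (vecm X) \<cdot>\<^sub>m 1\<^sub>m (n*m))\<^sup>T = rayleigh A (vecm X) \<cdot>\<^sub>m 1\<^sub>m (n*m)"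
    by (rule eq_matI) auto
  have Csym: "C\<^sup>T = C" unfolding C_def using A_carr A_sym st by (simp add: transpose_minus[of _ "n*m" "n*m"])
  have Cq: "\<And>y. y \<in> carrier_vec (n*m) \<Longrightarrow> y \<bullet> (C *\<^sub>v y) = y \<bullet> (A *\<^sub>v y) - R * (y \<bullet> y)"
  proof -
    fix y :: "real vec" assume y: "y \<in> carrier_vec (n*m)"
    have "C *\<^sub>v y = A *\<^sub>v y - R \<cdot>\<^sub>v y" unfolding C_def RR using A_carr y
      by (simp add: minus_mult_distrib_mat_vec[of _ "n*m" "n*m"] smult_one_mult_vec)
    thus "y \<bullet> (C *\<^sub>v y) = y \<bullet> (A *\<^sub>v y) - R * (y \<bullet> y)" using y A_carr
      by (simp add: scalar_prod_minus_distrib[of _ "n*m"] scalar_prod_smult_distrib[of _ "n*m"])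
  qed
  have LB: "\<And>y. y \<in> carrier_vec (n*m) \<Longrightarrow> y \<bullet> x = 0 \<Longrightarrow> y \<noteq> 0\<^sub>v (n*m) \<Longrightarrow>
      y \<bullet> (C *\<^sub>v y) \<ge> (lam1 + lam2 - 2 * R) * (y \<bullet> y)"
  proof -
    fix y :: "real vec" assume y: "y \<in> carrier_vec (n*m)" and yx: "y \<bullet> x = 0" and nz: "y \<noteq> 0\<^sub>v (n*m)"
    have p: "y \<bullet> y > 0" by (rule pos_sq[OF y nz])
    from kyfan[OF A_carr A_sym eig(3) eig(2) x xx y yx p]
    have "y \<bullet> (A *\<^sub>v y) + R * (y \<bullet> y) \<ge> (lam1 + lam2) * (y \<bullet> y)" unfolding Rx lam1_def lam2_def .
    thus "y \<bullet> (C *\<^sub>v y) \<ge> (lam1 + lam2 - 2 * R) * (y \<bullet> y)" unfolding Cq[OF y] by (simp add: algebra_simps)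
  qed
  from quad_upper[OF A_carr A_sym eig(3)] obtain K0 where K0: "\<forall>y \<in> carrier_vec (n*m). y \<bullet> (A *\<^sub>v y) \<le> K0 * (y \<bullet> y)"
    by blast
  define PQ where "PQ = perp_quotients C x"
  have dx: "dim_vec x = n*m" using x by simp
  have PQ_mem: "\<And>q. q \<in> PQ \<Longrightarrow> \<exists>y. y \<in> carrier_vec (n*m) \<and> y \<bullet> x = 0 \<and> y \<noteq> 0\<^sub>v (n*m) \<and> q = (y \<bullet> (C *\<^sub>v y)) / (y \<bullet> y)"
    unfolding PQ_def perp_quotients_def dx by blast
  have PQ_lb: "\<And>q. q \<in> PQ \<Longrightarrow> q \<ge> lam1 + lam2 - 2 * R"
  proof -
    fix q assume "q \<in> PQ"
    then obtain y where y: "y \<in> carrier_vec (n*m)" "y \<bullet> x = 0" "y \<noteq> 0\<^sub>v (n*m)" and q: "q = (y \<bullet> (C *\<^sub>v y)) / (y \<bullet> y)"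
      using PQ_mem by blast
    have p: "y \<bullet> y > 0" by (rule pos_sq[OF y(1) y(3)])
    show "q \<ge> lam1 + lam2 - 2 * R" unfolding q using LB[OF y] p by (simp add: pos_le_divide_eq)
  qed
  have PQ_ub: "\<And>q. q \<in> PQ \<Longrightarrow> q \<le> K0 - R"
  proof -
    fix q assume "q \<in> PQ"
    then obtain y where y: "y \<in> carrier_vec (n*m)" "y \<bullet> x = 0" "y \<noteq> 0\<^sub>v (n*m)" and q: "q = (y \<bullet> (C *\<^sub>v y)) / (y \<bullet> y)"
      using PQ_mem by blast
    have p: "y \<bullet> y > 0" by (rule pos_sq[OF y(1) y(3)])
    have "y \<bullet> (C *\<^sub>v y) \<le> (K0 - R) * (y \<bullet> y)" unfolding Cq[OF y(1)] using K0 y(1) by (simp add: algebra_simps)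
    thus "q \<le> K0 - R" unfolding q using p by (simp add: pos_divide_le_eq)
  qed
  have bddb: "bdd_below PQ" using PQ_lb by (intro bdd_belowI) auto
  have bdda: "bdd_above PQ" using PQ_ub by (intro bdd_aboveI) auto
  have Cloc_eq: "Cloc = (Emat U V)\<^sup>T * C * Emat U V" unfolding Cloc_def C_def ..
  have Wc: "W \<subseteq> carrier_vec N" unfolding W_def N_def by auto
  have TAU: "\<And>\<tau>. \<tau> \<in> W \<Longrightarrow> \<tau> \<noteq> 0\<^sub>v N \<Longrightarrow>
      E *\<^sub>v \<tau> \<in> carrier_vec (n*m) \<and> E *\<^sub>v \<tau> \<noteq> 0\<^sub>v (n*m) \<and> (E *\<^sub>v \<tau>) \<bullet> x = 0 \<and>
      (E *\<^sub>v \<tau>) \<bullet> (E *\<^sub>v \<tau>) = \<tau> \<bullet> \<tau> \<and> \<tau> \<bullet> (Cloc *\<^sub>v \<tau>) = (E *\<^sub>v \<tau>) \<bullet> (C *\<^sub>v (E *\<^sub>v \<tau>)) \<and> \<tau> \<bullet> \<tau> > 0"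
  proof -
    fix \<tau> assume tW: "\<tau> \<in> W" and tnz: "\<tau> \<noteq> 0\<^sub>v N"
    have t: "\<tau> \<in> carrier_vec (n*r + m*r + r*r)" and tB: "(Bmat U S V)\<^sup>T *\<^sub>v \<tau> = 0\<^sub>v (dim_col (Bmat U S V))"
      using tW unfolding W_def by auto
    note tl = tau_lemma[OF U V S UU VV Cc t tB]
    have tp: "\<tau> \<bullet> \<tau> > 0" using pos_sq[OF t] tnz unfolding N_def by simp
    have zz: "(E *\<^sub>v \<tau>) \<bullet> (E *\<^sub>v \<tau>) = \<tau> \<bullet> \<tau>" using tl(2) unfolding E_def .
    have znz: "E *\<^sub>v \<tau> \<noteq> 0\<^sub>v (n*m)"
    proof
      assume "E *\<^sub>v \<tau> = 0\<^sub>v (n*m)"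
      hence "(E *\<^sub>v \<tau>) \<bullet> (E *\<^sub>v \<tau>) = 0" by simp
      thus False using zz tp by simp
    qed
    show "E *\<^sub>v \<tau> \<in> carrier_vec (n*m) \<and> E *\<^sub>v \<tau> \<noteq> 0\<^sub>v (n*m) \<and> (E *\<^sub>v \<tau>) \<bullet> x = 0 \<and>
      (E *\<^sub>v \<tau>) \<bullet> (E *\<^sub>v \<tau>) = \<tau> \<bullet> \<tau> \<and> \<tau> \<bullet> (Cloc *\<^sub>v \<tau>) = (E *\<^sub>v \<tau>) \<bullet> (C *\<^sub>v (E *\<^sub>v \<tau>)) \<and> \<tau> \<bullet> \<tau> > 0"
      using tl(1) znz tl(3) zz tl(4) tp unfolding E_def xk Cloc_eq by simp
  qed
  have INT: "\<And>\<tau>. \<tau> \<in> W \<Longrightarrow> \<tau> \<noteq> 0\<^sub>v N \<Longrightarrow> (\<tau> \<bullet> (Cloc *\<^sub>v \<tau>)) / (\<tau> \<bullet> \<tau>) \<in> PQ"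
  proof -
    fix \<tau> assume "\<tau> \<in> W" "\<tau> \<noteq> 0\<^sub>v N"
    note T = TAU[OF this]
    show "(\<tau> \<bullet> (Cloc *\<^sub>v \<tau>)) / (\<tau> \<bullet> \<tau>) \<in> PQ" unfolding PQ_def perp_quotients_def dx
      using T by (intro CollectI exI[of _ "E *\<^sub>v \<tau>"]) auto
  qed
  have LBt: "\<And>\<tau>. \<tau> \<in> W \<Longrightarrow> \<tau> \<noteq> 0\<^sub>v N \<Longrightarrow> \<tau> \<bullet> (Cloc *\<^sub>v \<tau>) \<ge> (lam1 + lam2 - 2 * rayleigh A x) * (\<tau> \<bullet> \<tau>)"
  proof -
    fix \<tau> assume "\<tau> \<in> W" "\<tau> \<noteq> 0\<^sub>v N"
    note T = TAU[OF this]
    show "\<tau> \<bullet> (Cloc *\<^sub>v \<tau>) \<ge> (lam1 + lam2 - 2 * rayleigh A x) * (\<tau> \<bullet> \<tau>)"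
      using LB[of "E *\<^sub>v \<tau>"] T unfolding R_def by simp
  qed
  have part1: "\<forall>\<tau> \<in> W. \<tau> \<noteq> 0\<^sub>v N \<longrightarrow>
        (let z = E *\<^sub>v \<tau> in
           z \<noteq> 0\<^sub>v (n*m) \<and> z \<bullet> x = 0 \<and> sqrt (z \<bullet> z) = sqrt (\<tau> \<bullet> \<tau>)
           \<and> \<tau> \<bullet> (Cloc *\<^sub>v \<tau>) = z \<bullet> (C *\<^sub>v z)
           \<and> (\<tau> \<bullet> (Cloc *\<^sub>v \<tau>)) / (\<tau> \<bullet> \<tau>) \<in>
               {Inf (perp_quotients C x) .. Sup (perp_quotients C x)})
        \<and> \<tau> \<bullet> (Cloc *\<^sub>v \<tau>) \<ge> (lam1 + lam2 - 2 * rayleigh A x) * (\<tau> \<bullet> \<tau>)"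
  proof (intro ballI impI conjI)
    fix \<tau> assume tW: "\<tau> \<in> W" and tnz: "\<tau> \<noteq> 0\<^sub>v N"
    note T = TAU[OF tW tnz]
    have iq: "(\<tau> \<bullet> (Cloc *\<^sub>v \<tau>)) / (\<tau> \<bullet> \<tau>) \<in> PQ" by (rule INT[OF tW tnz])
    have "Inf PQ \<le> (\<tau> \<bullet> (Cloc *\<^sub>v \<tau>)) / (\<tau> \<bullet> \<tau>)" by (rule cInf_lower[OF iq bddb])
    moreover have "(\<tau> \<bullet> (Cloc *\<^sub>v \<tau>)) / (\<tau> \<bullet> \<tau>) \<le> Sup PQ" by (rule cSup_upper[OF iq bdda])
    ultimately show "let z = E *\<^sub>v \<tau> in
           z \<noteq> 0\<^sub>v (n*m) \<and> z \<bullet> x = 0 \<and> sqrt (z \<bullet> z) = sqrt (\<tau> \<bullet> \<tau>)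
           \<and> \<tau> \<bullet> (Cloc *\<^sub>v \<tau>) = z \<bullet> (C *\<^sub>v z)
           \<and> (\<tau> \<bullet> (Cloc *\<^sub>v \<tau>)) / (\<tau> \<bullet> \<tau>) \<in>
               {Inf (perp_quotients C x) .. Sup (perp_quotients C x)}"
      using T unfolding Let_def PQ_def by simp
    show "\<tau> \<bullet> (Cloc *\<^sub>v \<tau>) \<ge> (lam1 + lam2 - 2 * rayleigh A x) * (\<tau> \<bullet> \<tau>)" by (rule LBt[OF tW tnz])
  qed
  have part2: "rayleigh A x < (lam1 + lam2) / 2 \<longrightarrow>
        (\<forall>\<tau> \<in> W. \<tau> \<noteq> 0\<^sub>v N \<longrightarrow> \<tau> \<bullet> (Cloc *\<^sub>v \<tau>) > 0)
        \<and> (W \<noteq> {0\<^sub>v N} \<longrightarrow>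
            restr_cond ((1\<^sub>m N - B * B\<^sup>T) * Cloc * (1\<^sub>m N - B * B\<^sup>T)) W
              \<le> Sup (perp_quotients C x) / Inf (perp_quotients C x))"
  proof (rule impI)
    assume hR: "rayleigh A x < (lam1 + lam2) / 2"
    define c0 where "c0 = lam1 + lam2 - 2 * rayleigh A x"
    have c0: "c0 > 0" using hR unfolding c0_def by simp
    have POS: "\<And>\<tau>. \<tau> \<in> W \<Longrightarrow> \<tau> \<noteq> 0\<^sub>v N \<Longrightarrow> \<tau> \<bullet> (Cloc *\<^sub>v \<tau>) > 0"
    proof -
      fix \<tau> assume a1: "\<tau> \<in> W" and a2: "\<tau> \<noteq> 0\<^sub>v N"
      have "\<tau> \<bullet> \<tau> > 0" using TAU[OF a1 a2] by simp
      hence "c0 * (\<tau> \<bullet> \<tau>) > 0" using c0 by simp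
      thus "\<tau> \<bullet> (Cloc *\<^sub>v \<tau>) > 0" using LBt[OF a1 a2] unfolding c0_def by linarith
    qed
    show "(\<forall>\<tau> \<in> W. \<tau> \<noteq> 0\<^sub>v N \<longrightarrow> \<tau> \<bullet> (Cloc *\<^sub>v \<tau>) > 0)
        \<and> (W \<noteq> {0\<^sub>v N} \<longrightarrow>
            restr_cond ((1\<^sub>m N - B * B\<^sup>T) * Cloc * (1\<^sub>m N - B * B\<^sup>T)) W
              \<le> Sup (perp_quotients C x) / Inf (perp_quotients C x))"
    proof (intro conjI ballI impI)
      fix \<tau> assume "\<tau> \<in> W" "\<tau> \<noteq> 0\<^sub>v N"
      thus "\<tau> \<bullet> (Cloc *\<^sub>v \<tau>) > 0" by (rule POS)
    next
      assume Wnz: "W \<noteq> {0\<^sub>v N}"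
      define K2 where "K2 = r*r + r*r + 1"
      note BO = B_orth[OF U V S UU VV ss]
      have Bc: "B \<in> carrier_mat N K2" unfolding B_def N_def K2_def using BO(1) by (simp add: mult.commute)
      have BtB: "B\<^sup>T * B = 1\<^sub>m K2" unfolding B_def K2_def using BO(2) .
      have dcB: "dim_col B = K2" using Bc by simp
      have Wchar: "\<And>w. w \<in> W \<longleftrightarrow> w \<in> carrier_vec N \<and> B\<^sup>T *\<^sub>v w = 0\<^sub>v K2"
        unfolding W_def N_def B_def[symmetric] dcB by simp
      have zW: "0\<^sub>v N \<in> W" unfolding Wchar using Bc by simp
      obtain \<tau>0 where t0W: "\<tau>0 \<in> W" and t0nz: "\<tau>0 \<noteq> 0\<^sub>v N" using Wnz zW by blast
      have PQne: "PQ \<noteq> {}" using INT[OF t0W t0nz] by blast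
      have InfL: "Inf PQ \<ge> c0" unfolding c0_def R_def[symmetric]
        by (rule cInf_greatest[OF PQne]) (rule PQ_lb)
      define P where "P = 1\<^sub>m N - B * B\<^sup>T"
      have Pc: "P \<in> carrier_mat N N" unfolding P_def by (intro minus_carrier_mat) (use Bc in simp)
      have Psym: "P\<^sup>T = P" unfolding P_def using Bc
        by (simp add: transpose_minus[of _ N N] transpose_mult[of _ N K2])
      have PW: "\<And>w. w \<in> W \<Longrightarrow> P *\<^sub>v w = w"
      proof -
        fix w assume "w \<in> W"
        hence w: "w \<in> carrier_vec N" and bw: "B\<^sup>T *\<^sub>v w = 0\<^sub>v K2" unfolding Wchar by auto
        have "P *\<^sub>v w = w - (B * B\<^sup>T) *\<^sub>v w" unfolding P_def using Bc w
          by (simp add: minus_mult_distrib_mat_vec[of _ N N])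
        also have "(B * B\<^sup>T) *\<^sub>v w = B *\<^sub>v (B\<^sup>T *\<^sub>v w)" using Bc w by (simp add: assoc_mult_mat_vec[of _ N K2 _ N])
        also have "\<dots> = 0\<^sub>v N" unfolding bw using Bc by simp
        finally show "P *\<^sub>v w = w" using w by simp
      qed
      have BtP: "B\<^sup>T * P = 0\<^sub>m K2 N"
      proof -
        have "B\<^sup>T * P = B\<^sup>T * 1\<^sub>m N - B\<^sup>T * (B * B\<^sup>T)" unfolding P_def
          by (subst mult_minus_distrib_mat[of _ K2 N]) (use Bc in auto)
        also have "B\<^sup>T * (B * B\<^sup>T) = (B\<^sup>T * B) * B\<^sup>T" using Bc by (simp add: assoc_mult_mat[of _ K2 N _ K2 _ N])
        also have "\<dots> = B\<^sup>T" unfolding BtB using Bc by simp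
        finally show ?thesis using Bc by simp
      qed
      have Ec: "E \<in> carrier_mat (n*m) N"
      proof -
        have "Emat U V \<in> carrier_mat (m*n) (r*n + m*r + r*r)" unfolding Emat_def using U V
          by (intro hcat_carrier) (auto simp: kron_carrier')
        thus ?thesis unfolding E_def N_def by (simp add: mult.commute)
      qed
      have CE: "Cloc = E\<^sup>T * C * E" unfolding Cloc_eq E_def ..
      have Clc: "Cloc \<in> carrier_mat N N" unfolding CE using Ec Cc by simp
      have Clsym: "Cloc\<^sup>T = Cloc"
      proof -
        have "Cloc\<^sup>T = E\<^sup>T * (E\<^sup>T * C)\<^sup>T" unfolding CE using Ec Cc
          by (subst transpose_mult[of _ N "n*m" _ N]) auto
        also have "(E\<^sup>T * C)\<^sup>T = C\<^sup>T * E" using Ec Cc by (subst transpose_mult[of _ N "n*m" _ "n*m"]) auto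
        finally show ?thesis unfolding CE Csym using Ec Cc by (simp add: assoc_mult_mat[of _ N "n*m" _ "n*m" _ N])
      qed
      define M where "M = P * Cloc * P"
      have Mdef: "(1\<^sub>m N - B * B\<^sup>T) * Cloc * (1\<^sub>m N - B * B\<^sup>T) = M" unfolding M_def P_def ..
      have Mc: "M \<in> carrier_mat N N" unfolding M_def using Pc Clc by simp
      have Msym: "M\<^sup>T = M"
      proof -
        have "M\<^sup>T = P\<^sup>T * (P * Cloc)\<^sup>T" unfolding M_def using Pc Clc
          by (subst transpose_mult[of _ N N _ N]) auto
        also have "(P * Cloc)\<^sup>T = Cloc\<^sup>T * P\<^sup>T" using Pc Clc by (subst transpose_mult[of _ N N _ N]) auto
        finally show ?thesis unfolding Psym Clsym M_def using Pc Clc by (simp add: assoc_mult_mat[of _ N N _ N _ N])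
      qed
      have MW: "\<And>w. w \<in> W \<Longrightarrow> w \<bullet> (M *\<^sub>v w) = w \<bullet> (Cloc *\<^sub>v w)"
      proof -
        fix w assume wW: "w \<in> W"
        hence w: "w \<in> carrier_vec N" unfolding Wchar by auto
        have "M *\<^sub>v w = P *\<^sub>v (Cloc *\<^sub>v (P *\<^sub>v w))" unfolding M_def using Pc Clc w
          by (simp add: assoc_mult_mat_vec[of _ N N _ N])
        also have "\<dots> = P *\<^sub>v (Cloc *\<^sub>v w)" unfolding PW[OF wW] ..
        finally have "w \<bullet> (M *\<^sub>v w) = w \<bullet> (P *\<^sub>v (Cloc *\<^sub>v w))" by simp
        also have "\<dots> = (P\<^sup>T *\<^sub>v w) \<bullet> (Cloc *\<^sub>v w)"
          by (rule transpose_vec_mult_scalar[symmetric]) (use Pc Clc w in auto)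
        also have "\<dots> = w \<bullet> (Cloc *\<^sub>v w)" unfolding Psym PW[OF wW] ..
        finally show "w \<bullet> (M *\<^sub>v w) = w \<bullet> (Cloc *\<^sub>v w)" .
      qed
      have Wc': "W \<subseteq> carrier_vec N" using Wchar by auto
      define Eg where "Eg = restr_eigs M W"
      have fin: "finite Eg" unfolding Eg_def by (rule eigs_finite[OF Mc Wc'])
      have dcM: "dim_col M = N" using Mc by simp
      have range: "\<And>\<mu>. \<mu> \<in> Eg \<Longrightarrow> Inf PQ \<le> \<mu> \<and> \<mu> \<le> Sup PQ"
      proof -
        fix \<mu> assume "\<mu> \<in> Eg"
        then obtain w where wW: "w \<in> W" and wnz: "w \<noteq> 0\<^sub>v N" and ev: "M *\<^sub>v w = \<mu> \<cdot>\<^sub>v w"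
          unfolding Eg_def restr_eigs_def dcM by blast
        have w: "w \<in> carrier_vec N" using wW Wc' by auto
        have wp: "w \<bullet> w > 0" using TAU[OF wW wnz] by simp
        have "w \<bullet> (Cloc *\<^sub>v w) = \<mu> * (w \<bullet> w)" unfolding MW[OF wW, symmetric] ev
          using w by (simp add: scalar_prod_smult_distrib[of _ N])
        hence mu: "\<mu> = (w \<bullet> (Cloc *\<^sub>v w)) / (w \<bullet> w)" using wp by simp
        have iq: "\<mu> \<in> PQ" unfolding mu by (rule INT[OF wW wnz])
        show "Inf PQ \<le> \<mu> \<and> \<mu> \<le> Sup PQ" using cInf_lower[OF iq bddb] cSup_upper[OF iq bdda] by simp
      qed
      have t0c: "\<tau>0 \<in> carrier_vec N" using t0W Wc' by auto
      have "\<tau>0 \<bullet> (M *\<^sub>v \<tau>0) > 0" unfolding MW[OF t0W] by (rule POS[OF t0W t0nz])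
      hence "\<tau>0 \<bullet> (M *\<^sub>v \<tau>0) \<noteq> 0" by simp
      from eig_exists[OF Mc Msym t0c this] obtain v \<mu> where v: "v \<in> carrier_vec N" and vnz: "v \<noteq> 0\<^sub>v N"
        and mu: "\<mu> \<noteq> 0" and ev: "M *\<^sub>v v = \<mu> \<cdot>\<^sub>v v" by blast
      have BtM: "B\<^sup>T * M = 0\<^sub>m K2 N"
      proof -
        have "B\<^sup>T * M = (B\<^sup>T * P) * Cloc * P" unfolding M_def using Bc Pc Clc
          by (simp add: assoc_mult_mat[of _ K2 N _ N _ N])
        thus ?thesis unfolding BtP using Pc Clc by simp
      qed
      have "\<mu> \<cdot>\<^sub>v (B\<^sup>T *\<^sub>v v) = B\<^sup>T *\<^sub>v (M *\<^sub>v v)" unfolding ev using Bc v by (simp add: mult_mat_vec[of _ K2 N])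
      also have "\<dots> = (B\<^sup>T * M) *\<^sub>v v" using Bc Mc v by (simp add: assoc_mult_mat_vec[of _ K2 N _ N])
      also have "\<dots> = 0\<^sub>v K2" unfolding BtM using v by (intro eq_vecI) (auto simp: scalar_prod_def)
      finally have "\<mu> \<cdot>\<^sub>v (B\<^sup>T *\<^sub>v v) = 0\<^sub>v K2" .
      hence "(1 / \<mu>) \<cdot>\<^sub>v (\<mu> \<cdot>\<^sub>v (B\<^sup>T *\<^sub>v v)) = (1 / \<mu>) \<cdot>\<^sub>v 0\<^sub>v K2" by (rule arg_cong)
      also have "(1 / \<mu>) \<cdot>\<^sub>v (0\<^sub>v K2 :: real vec) = 0\<^sub>v K2" by (intro eq_vecI) auto
      finally have "(1 / \<mu>) \<cdot>\<^sub>v (\<mu> \<cdot>\<^sub>v (B\<^sup>T *\<^sub>v v)) = 0\<^sub>v K2" .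
      hence "B\<^sup>T *\<^sub>v v = 0\<^sub>v K2" using mu by (simp add: smult_smult_assoc)
      hence vW: "v \<in> W" unfolding Wchar using v by simp
      have muE: "\<mu> \<in> Eg" unfolding Eg_def restr_eigs_def dcM using vW vnz ev by blast
      have Ene: "Eg \<noteq> {}" using muE by blast
      have MaxE: "Max Eg \<in> Eg" by (rule Max_in[OF fin Ene])
      have MinE: "Min Eg \<in> Eg" by (rule Min_in[OF fin Ene])
      have mm: "Min Eg \<le> Max Eg" using Min_le[OF fin MaxE] .
      have minpos: "Min Eg \<ge> Inf PQ" using range[OF MinE] by simp
      have maxle: "Max Eg \<le> Sup PQ" using range[OF MaxE] by simp
      have infpos: "Inf PQ > 0" using InfL c0 by simp
      have "Max Eg / Min Eg \<le> Sup PQ / Min Eg"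
        using maxle minpos infpos by (intro divide_right_mono) auto
      also have "\<dots> \<le> Sup PQ / Inf PQ"
        using minpos infpos mm maxle by (intro divide_left_mono) auto
      finally show "restr_cond ((1\<^sub>m N - B * B\<^sup>T) * Cloc * (1\<^sub>m N - B * B\<^sup>T)) W
              \<le> Sup (perp_quotients C x) / Inf (perp_quotients C x)"
        unfolding Mdef restr_cond_def Eg_def[symmetric] PQ_def[symmetric] .
    qed
  qed
  show ?thesis using part1 part2 by blast
qed


end
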